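(* Let $G=(V,D,B)$ be a mixed graph, $v\in V$, and $Y\subseteq V\setminus(\{v\}\cup\mathrm{sib}(v))$ with $|Y|=|\mathrm{pa}(v)|=n$. Write $Y=\{y_1,\dots,y_n\}$, $\mathrm{pa}(v)=\{p_1,\dots,p_n\}$, and for $(\Lambda,\Omega)\in\Theta$ with $\Sigma=\phi_G(\Lambda,\Omega)$ define the $n\times n$ matrix $\mathbf{A}$ by $\mathbf{A}_{ij}=[(I-\Lambda)^T\Sigma]_{y_ip_j}$ if $y_i\in\mathrm{htr}(v)$ and $\mathbf{A}_{ij}=\Sigma_{y_ip_j}$ if $y_i\notin\mathrm{htr}(v)$. If $Y$ satisfies the half-trek criterion with respect to $v$, then $\mathbf{A}$ is generically invertible, i.e. $\det\mathbf{A}$, as a function of $(\Lambda,\Omega)\in\Theta$, is nonzero outside a proper algebraic subset of $\Theta$.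
   Context: A mixed graph is $G=(V,D,B)$ with $V=[m]$, $D$ directed edges $v\to w$, $B$ symmetric bidirected edges $v\leftrightarrow w$, no self-loops. $\mathrm{pa}(v)=\{w:w\to v\in D\}$, $\mathrm{sib}(v)=\{w:w\leftrightarrow v\in B\}$. $\mathbb{R}^D_{\mathrm{reg}}$: real $m\times m$ $\Lambda$ with $\lambda_{vw}=0$ for $v\to w\notin D$ and $I-\Lambda$ invertible; $\mathrm{PD}(B)$: positive definite symmetric $\Omega$ with $\omega_{vw}=0$ for $v\ne w$, $v\leftrightarrow w\notin B$; $\Theta=\mathbb{R}^D_{\mathrm{reg}}\times\mathrm{PD}(B)$; $\phi_G(\Lambda,\Omega)=(I-\Lambda)^{-T}\Omega(I-\Lambda)^{-1}$. A proper algebraic subset of $\Theta$ is the zero set in $\Theta$ of polynomials in the entries, not all of $\Theta$. A half-trek from $y$ to $w$ is a path $y\leftrightarrow w_0\to w_1\to\cdots\to w_r=w$ (left side $\{y\}$, right side $\{w_0,\dots,w_r\}$) or $y\to w_1\to\cdots\to w_r=w$, $r\ge0$ (left side $\{y\}$, right side $\{y,w_1,\dots,w_r\}$); nodes may repeat. $\mathrm{htr}(v)$ is the set of $w\in V\setminus(\{v\}\cup\mathrm{sib}(v))$ reachable from $v$ by a half-trek. A system of half-treks from $X$ to $Y$: half-treks with distinct sources forming $X$ and distinct targets forming $Y$; no sided intersection: pairwise disjoint left sides and pairwise disjoint right sides. $Y$ satisfies the half-trek criterion w.r.t. $v$ if $|Y|=|\mathrm{pa}(v)|$, $Y\cap(\{v\}\cup\mathrm{sib}(v))=\emptyset$,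 and there is a system of half-treks with no sided intersection from $Y$ to $\mathrm{pa}(v)$. *)

theory Defs
  imports "Jordan_Normal_Form.Determinant"
begin

text \<open>Mixed graph on vertex set V = {0..<m}: directed edges D (pairs (v,w) meaning v \<rightarrow> w),
bidirected edges B (symmetric).\<close>

definition mixed_graph :: "nat \<Rightarrow> (nat \<times> nat) set \<Rightarrow> (nat \<times> nat) set \<Rightarrow> bool" where
  "mixed_graph m D B \<longleftrightarrow>
     D \<subseteq> {0..<m} \<times> {0..<m} \<and> B \<subseteq> {0..<m} \<times> {0..<m} \<and>
     (\<forall>v. (v, v) \<notin> D) \<and> (\<forall>v. (v, v) \<notin> B) \<and> (\<forall>v w. (v, w) \<in> B \<longrightarrow> (w, v) \<in> B)"

definition pa :: "(nat \<times> nat) set \<Rightarrow> nat \<Rightarrow> nat set" where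
  "pa D v = {w. (w, v) \<in> D}"

definition sib :: "(nat \<times> nat) set \<Rightarrow> nat \<Rightarrow> nat set" where
  "sib B v = {w. (w, v) \<in> B}"

definition directed_walk :: "(nat \<times> nat) set \<Rightarrow> nat list \<Rightarrow> bool" where
  "directed_walk D ws \<longleftrightarrow> ws \<noteq> [] \<and> (\<forall>i. Suc i < length ws \<longrightarrow> (ws ! i, ws ! Suc i) \<in> D)"

text \<open>A half-trek from y to w, encoded by its source y and the list ws of its right-side nodes:
either y \<leftrightarrow> w0 \<rightarrow> ... \<rightarrow> wr = w with ws = [w0,...,wr], or y \<rightarrow> w1 \<rightarrow> ... \<rightarrow> wr = w with
ws = [y,w1,...,wr]. Left side is {y}, right side is set ws.\<close>
definition half_trek :: "(nat \<times> nat) set \<Rightarrow> (nat \<times> nat) set \<Rightarrow> nat \<Rightarrow> nat list \<Rightarrow> nat \<Rightarrow> bool" where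
  "half_trek D B y ws w \<longleftrightarrow>
     directed_walk D ws \<and> last ws = w \<and> ((y, hd ws) \<in> B \<or> hd ws = y)"

definition htr :: "nat \<Rightarrow> (nat \<times> nat) set \<Rightarrow> (nat \<times> nat) set \<Rightarrow> nat \<Rightarrow> nat set" where
  "htr m D B v = {w \<in> {0..<m}. w \<notin> {v} \<union> sib B v \<and> (\<exists>ws. half_trek D B v ws w)}"

text \<open>System of half-treks with no sided intersection from X to Z: a bijection \<sigma> : X \<rightarrow> Z
(source to target) and for each source x a half-trek (right side list \<pi> x) from x to \<sigma> x;
left sides {x} are pairwise disjoint since sources are distinct, and right sides are pairwise disjoint.\<close>
definition system_no_sided_intersection ::
  "(nat \<times> nat) set \<Rightarrow> (nat \<times> nat) set \<Rightarrow> nat set \<Rightarrow> nat set \<Rightarrow> bool" where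
  "system_no_sided_intersection D B X Z \<longleftrightarrow>
     (\<exists>\<sigma> \<pi>. bij_betw \<sigma> X Z \<and> (\<forall>x\<in>X. half_trek D B x (\<pi> x) (\<sigma> x)) \<and>
        (\<forall>x1\<in>X. \<forall>x2\<in>X. x1 \<noteq> x2 \<longrightarrow> set (\<pi> x1) \<inter> set (\<pi> x2) = {}))"

definition HTC :: "(nat \<times> nat) set \<Rightarrow> (nat \<times> nat) set \<Rightarrow> nat \<Rightarrow> nat set \<Rightarrow> bool" where
  "HTC D B v Y \<longleftrightarrow> card Y = card (pa D v) \<and> Y \<inter> ({v} \<union> sib B v) = {} \<and>
     system_no_sided_intersection D B Y (pa D v)"

definition pos_def_mat :: "real mat \<Rightarrow> bool" where
  "pos_def_mat A \<longleftrightarrow> (\<forall>x \<in> carrier_vec (dim_row A). x \<noteq> 0\<^sub>v (dim_row A) \<longrightarrow> x \<bullet> (A *\<^sub>v x) > 0)"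

definition Theta :: "nat \<Rightarrow> (nat \<times> nat) set \<Rightarrow> (nat \<times> nat) set \<Rightarrow> (real mat \<times> real mat) set" where
  "Theta m D B = {(\<Lambda>, \<Omega>).
     \<Lambda> \<in> carrier_mat m m \<and> (\<forall>i<m. \<forall>j<m. (i, j) \<notin> D \<longrightarrow> \<Lambda> $$ (i, j) = 0) \<and>
     invertible_mat (1\<^sub>m m - \<Lambda>) \<and>
     \<Omega> \<in> carrier_mat m m \<and> \<Omega>\<^sup>T = \<Omega> \<and> pos_def_mat \<Omega> \<and>
     (\<forall>i<m. \<forall>j<m. i \<noteq> j \<and> (i, j) \<notin> B \<longrightarrow> \<Omega> $$ (i, j) = 0)}"

definition mat_inv :: "nat \<Rightarrow> real mat \<Rightarrow> real mat" where
  "mat_inv m A = (THE C. C \<in> carrier_mat m m \<and> A * C = 1\<^sub>m m \<and> C * A = 1\<^sub>m m)"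

definition phi :: "nat \<Rightarrow> real mat \<Rightarrow> real mat \<Rightarrow> real mat" where
  "phi m \<Lambda> \<Omega> = (mat_inv m (1\<^sub>m m - \<Lambda>))\<^sup>T * \<Omega> * mat_inv m (1\<^sub>m m - \<Lambda>)"

inductive poly_fun :: "nat \<Rightarrow> (real mat \<times> real mat \<Rightarrow> real) \<Rightarrow> bool" for m where
  const: "poly_fun m (\<lambda>_. c)"
| lam: "i < m \<Longrightarrow> j < m \<Longrightarrow> poly_fun m (\<lambda>(\<Lambda>, \<Omega>). \<Lambda> $$ (i, j))"
| om: "i < m \<Longrightarrow> j < m \<Longrightarrow> poly_fun m (\<lambda>(\<Lambda>, \<Omega>). \<Omega> $$ (i, j))"
| add: "poly_fun m f \<Longrightarrow> poly_fun m g \<Longrightarrow> poly_fun m (\<lambda>x. f x + g x)"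
| mult: "poly_fun m f \<Longrightarrow> poly_fun m g \<Longrightarrow> poly_fun m (\<lambda>x. f x * g x)"

definition proper_algebraic_subset :: "nat \<Rightarrow> (nat \<times> nat) set \<Rightarrow> (nat \<times> nat) set \<Rightarrow> (real mat \<times> real mat) set \<Rightarrow> bool" where
  "proper_algebraic_subset m D B S \<longleftrightarrow>
     (\<exists>F. (\<forall>f\<in>F. poly_fun m f) \<and> S = {\<theta> \<in> Theta m D B. \<forall>f\<in>F. f \<theta> = 0} \<and> S \<noteq> Theta m D B)"

text \<open>The matrix A of the statement, for enumerations y of Y and p of pa(v) (indices 0..<n).\<close>
definition matA :: "nat \<Rightarrow> (nat \<times> nat) set \<Rightarrow> (nat \<times> nat) set \<Rightarrow> nat \<Rightarrow> nat \<Rightarrow> (nat \<Rightarrow> nat) \<Rightarrow> (nat \<Rightarrow> nat)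
    \<Rightarrow> real mat \<Rightarrow> real mat \<Rightarrow> real mat" where
  "matA m D B v n y p \<Lambda> \<Omega> =
     (let \<Sigma> = phi m \<Lambda> \<Omega> in
      mat n n (\<lambda>(i, j). if y i \<in> htr m D B v then ((1\<^sub>m m - \<Lambda>)\<^sup>T * \<Sigma>) $$ (y i, p j)
                        else \<Sigma> $$ (y i, p j)))"

end

theory Submission
  imports Defs
begin


fun walk :: "(nat \<times> nat) set \<Rightarrow> nat list \<Rightarrow> bool" where
  "walk D [] = False"
| "walk D [a] = True"
| "walk D (a # b # ws) = ((a, b) \<in> D \<and> walk D (b # ws))"

lemma directed_walk_Cons2:
  "directed_walk D (a # b # ws) \<longleftrightarrow> (a,b) \<in> D \<and> directed_walk D (b # ws)"
proof
  assume h: "directed_walk D (a # b # ws)"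
  have "(a,b) \<in> D" using h unfolding directed_walk_def by (drule_tac conjunct2, drule_tac x=0 in spec) simp
  moreover have "directed_walk D (b # ws)"
    unfolding directed_walk_def
  proof (intro conjI allI impI)
    fix i assume "Suc i < length (b # ws)"
    then have "Suc (Suc i) < length (a # b # ws)" by simp
    then have "((a # b # ws) ! Suc i, (a # b # ws) ! Suc (Suc i)) \<in> D" using h unfolding directed_walk_def by blast
    then show "((b # ws) ! i, (b # ws) ! Suc i) \<in> D" by simp
  qed simp
  ultimately show "(a,b) \<in> D \<and> directed_walk D (b # ws)" by simp
next
  assume h: "(a,b) \<in> D \<and> directed_walk D (b # ws)"
  show "directed_walk D (a # b # ws)"
    unfolding directed_walk_def
  proof (intro conjI allI impI)
    fix i assume i: "Suc i < length (a # b # ws)"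
    show "((a # b # ws) ! i, (a # b # ws) ! Suc i) \<in> D"
    proof (cases i)
      case 0 then show ?thesis using h by simp
    next
      case (Suc j)
      then have "Suc j < length (b # ws)" using i by simp
      then show ?thesis using h Suc unfolding directed_walk_def by simp
    qed
  qed simp
qed

lemma walk_iff: "walk D ws \<longleftrightarrow> directed_walk D ws"
proof (induction D ws rule: walk.induct)
  case (1 D) then show ?case by (simp add: directed_walk_def)
next
  case (2 D a) then show ?case by (simp add: directed_walk_def)
next
  case (3 D a b ws) then show ?case by (simp add: directed_walk_Cons2)
qed

lemma walk_nonempty: "walk D ws \<Longrightarrow> ws \<noteq> []" by auto

lemma walk_nth: "walk D ws \<Longrightarrow> Suc i < length ws \<Longrightarrow> (ws ! i, ws ! Suc i) \<in> D"
  by (simp add: walk_iff directed_walk_def)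

lemma walk_drop: "walk D ws \<Longrightarrow> k < length ws \<Longrightarrow> walk D (drop k ws)"
  unfolding walk_iff directed_walk_def by (auto simp: add.commute)

lemma walk_append: "walk D (xs @ y # zs) \<longleftrightarrow> walk D (xs @ [y]) \<and> walk D (y # zs)"
proof (induction xs)
  case Nil then show ?case by (cases zs) auto
next
  case (Cons a xs)
  then show ?case by (cases xs) auto
qed

lemma walk_shortcut:
  assumes w: "walk D ws" and nd: "\<not> distinct ws"
  shows "\<exists>ws'. walk D ws' \<and> hd ws' = hd ws \<and> last ws' = last ws \<and> set ws' \<subseteq> set ws \<and> length ws' < length ws"
proof -
  obtain xs ys zs y where ws: "ws = xs @ [y] @ ys @ [y] @ zs"
    using not_distinct_decomp[OF nd] by blast
  have "walk D (xs @ [y]) \<and> walk D (y # ys @ [y] @ zs)" using w ws walk_append[of D xs y "ys @ [y] @ zs"] by simp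
  moreover have "walk D ((y # ys) @ y # zs) \<Longrightarrow> walk D (y # zs)" using walk_append[of D "y # ys" y zs] by simp
  ultimately have "walk D (xs @ y # zs)" using walk_append[of D xs y zs] by simp
  moreover have "hd (xs @ y # zs) = hd ws" using ws by (cases xs) auto
  moreover have "last (xs @ y # zs) = last ws" using ws by (cases zs) auto
  moreover have "set (xs @ y # zs) \<subseteq> set ws" using ws by auto
  moreover have "length (xs @ y # zs) < length ws" using ws by simp
  ultimately show ?thesis by blast
qed

definition Sys :: "(nat \<times> nat) set \<Rightarrow> (nat \<times> nat) set \<Rightarrow> nat set \<Rightarrow> nat set \<Rightarrow> (nat \<Rightarrow> nat) \<Rightarrow> (nat \<Rightarrow> nat list) \<Rightarrow> bool" where
  "Sys D B Y P \<sigma> \<pi> \<longleftrightarrow> bij_betw \<sigma> Y P \<and>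
     (\<forall>z\<in>Y. walk D (\<pi> z) \<and> last (\<pi> z) = \<sigma> z \<and> ((z, hd (\<pi> z)) \<in> B \<or> hd (\<pi> z) = z)) \<and>
     (\<forall>z1\<in>Y. \<forall>z2\<in>Y. z1 \<noteq> z2 \<longrightarrow> set (\<pi> z1) \<inter> set (\<pi> z2) = {})"

definition cost :: "nat \<Rightarrow> nat list \<Rightarrow> nat" where
  "cost z ws = 2 * length ws + (if hd ws = z then 0 else 1)"

definition mu :: "nat set \<Rightarrow> (nat \<Rightarrow> nat list) \<Rightarrow> nat" where
  "mu Y \<pi> = (\<Sum>z\<in>Y. cost z (\<pi> z))"

lemma system_Sys:
  assumes "system_no_sided_intersection D B Y P"
  shows "\<exists>\<sigma> \<pi>. Sys D B Y P \<sigma> \<pi>"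
  using assms unfolding system_no_sided_intersection_def Sys_def half_trek_def walk_iff by blast

lemma minimal_Sys:
  assumes "\<exists>\<sigma> \<pi>. Sys D B Y P \<sigma> \<pi>"
  shows "\<exists>\<sigma> \<pi>. Sys D B Y P \<sigma> \<pi> \<and> (\<forall>\<sigma>' \<pi>'. Sys D B Y P \<sigma>' \<pi>' \<longrightarrow> mu Y \<pi> \<le> mu Y \<pi>')"
proof -
  obtain \<sigma>0 \<pi>0 where "Sys D B Y P \<sigma>0 \<pi>0" using assms by blast
  then have "(\<lambda>x. Sys D B Y P (fst x) (snd x)) (\<sigma>0, \<pi>0)" by simp
  from ex_has_least_nat[of "\<lambda>x. Sys D B Y P (fst x) (snd x)", OF this, of "\<lambda>x. mu Y (snd x)"]
  obtain x where "Sys D B Y P (fst x) (snd x)" "\<forall>y. Sys D B Y P (fst y) (snd y) \<longrightarrow> mu Y (snd x) \<le> mu Y (snd y)"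
    by blast
  then show ?thesis by (metis fst_conv snd_conv)
qed

lemma Sys_single:
  assumes fin: "finite Y" and S: "Sys D B Y P \<sigma> \<pi>" and z: "z \<in> Y"
    and w: "walk D ws" "last ws = \<sigma> z" "(z, hd ws) \<in> B \<or> hd ws = z"
    and sub: "set ws \<subseteq> set (\<pi> z)" and c: "cost z ws < cost z (\<pi> z)"
  shows "Sys D B Y P \<sigma> (\<pi>(z := ws)) \<and> mu Y (\<pi>(z := ws)) < mu Y \<pi>"
proof
  show "Sys D B Y P \<sigma> (\<pi>(z := ws))"
  proof -
    have a: "bij_betw \<sigma> Y P" using S unfolding Sys_def by blast
    have b: "\<forall>x\<in>Y. walk D ((\<pi>(z := ws)) x) \<and> last ((\<pi>(z := ws)) x) = \<sigma> x \<and> ((x, hd ((\<pi>(z := ws)) x)) \<in> B \<or> hd ((\<pi>(z := ws)) x) = x)"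
      using S w unfolding Sys_def by auto
    have c: "\<forall>z1\<in>Y. \<forall>z2\<in>Y. z1 \<noteq> z2 \<longrightarrow> set ((\<pi>(z := ws)) z1) \<inter> set ((\<pi>(z := ws)) z2) = {}"
    proof (intro ballI impI)
      fix z1 z2 assume "z1 \<in> Y" "z2 \<in> Y" "z1 \<noteq> z2"
      then have "set (\<pi> z1) \<inter> set (\<pi> z2) = {}" using S unfolding Sys_def by blast
      then show "set ((\<pi>(z := ws)) z1) \<inter> set ((\<pi>(z := ws)) z2) = {}" using sub by auto
    qed
    show ?thesis using a b c unfolding Sys_def by blast
  qed
  have "mu Y (\<pi>(z := ws)) = cost z ws + (\<Sum>x\<in>Y - {z}. cost x (\<pi> x))"
    unfolding mu_def using fin z by (simp add: sum.remove)
  also have "\<dots> < cost z (\<pi> z) + (\<Sum>x\<in>Y - {z}. cost x (\<pi> x))" using c by simp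
  also have "\<dots> = mu Y \<pi>" unfolding mu_def using fin z by (simp add: sum.remove)
  finally show "mu Y (\<pi>(z := ws)) < mu Y \<pi>" .
qed

lemma cost_drop: "kk < length ws \<Longrightarrow> cost z (drop kk ws) = 2 * (length ws - kk) + (if ws ! kk = z then 0 else 1)"
  unfolding cost_def by (simp add: hd_drop_conv_nth)

definition Grel :: "nat set \<Rightarrow> (nat \<Rightarrow> nat list) \<Rightarrow> (nat \<times> nat) set" where
  "Grel Y \<pi> = {(a,w). a \<in> Y \<and> w \<in> Y \<and> a \<noteq> w \<and> (a \<in> set (\<pi> w) \<or> (\<exists>c\<in>Y. hd (\<pi> c) \<noteq> c \<and> a = hd (\<pi> c) \<and> c \<in> set (\<pi> w)))}"

locale minsys =
  fixes D B :: "(nat \<times> nat) set" and Y P :: "nat set" and \<sigma> :: "nat \<Rightarrow> nat" and \<pi> :: "nat \<Rightarrow> nat list"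
  assumes finY: "finite Y"
    and S: "Sys D B Y P \<sigma> \<pi>"
    and minimal: "\<And>\<sigma>' \<pi>'. Sys D B Y P \<sigma>' \<pi>' \<Longrightarrow> mu Y \<pi> \<le> mu Y \<pi>'"
    and symB: "\<And>a b. (a, b) \<in> B \<Longrightarrow> (b, a) \<in> B"
begin

lemma walkz: "z \<in> Y \<Longrightarrow> walk D (\<pi> z)" using S unfolding Sys_def by blast
lemma lastz: "z \<in> Y \<Longrightarrow> last (\<pi> z) = \<sigma> z" using S unfolding Sys_def by blast
lemma hdz: "z \<in> Y \<Longrightarrow> (z, hd (\<pi> z)) \<in> B \<or> hd (\<pi> z) = z" using S unfolding Sys_def by blast
lemma disj: "z1 \<in> Y \<Longrightarrow> z2 \<in> Y \<Longrightarrow> x \<in> set (\<pi> z1) \<Longrightarrow> x \<in> set (\<pi> z2) \<Longrightarrow> z1 = z2"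
  using S unfolding Sys_def by blast
lemma nonempty: "z \<in> Y \<Longrightarrow> \<pi> z \<noteq> []" using walkz[of z] by (cases "\<pi> z") auto

lemma distinct_paths: "z \<in> Y \<Longrightarrow> distinct (\<pi> z)"
proof (rule ccontr)
  assume z: "z \<in> Y" and nd: "\<not> distinct (\<pi> z)"
  obtain ws where ws: "walk D ws" "hd ws = hd (\<pi> z)" "last ws = last (\<pi> z)" "set ws \<subseteq> set (\<pi> z)" "length ws < length (\<pi> z)"
    using walk_shortcut[OF walkz[OF z] nd] by blast
  have "cost z ws < cost z (\<pi> z)" using ws unfolding cost_def by auto
  then have "mu Y (\<pi>(z := ws)) < mu Y \<pi>" "Sys D B Y P \<sigma> (\<pi>(z := ws))"
    using Sys_single[OF finY S z ws(1) _ _ ws(4)] ws lastz[OF z] hdz[OF z] by auto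
  then show False using minimal by fastforce
qed

lemma selfhd: "z \<in> Y \<Longrightarrow> z \<in> set (\<pi> z) \<Longrightarrow> hd (\<pi> z) = z"
proof (rule ccontr)
  assume z: "z \<in> Y" and zin: "z \<in> set (\<pi> z)" and h: "hd (\<pi> z) \<noteq> z"
  obtain k where k: "k < length (\<pi> z)" "\<pi> z ! k = z" using zin by (meson in_set_conv_nth)
  have k0: "k \<noteq> 0" using k h nonempty[OF z] by (metis hd_conv_nth)
  define ws where "ws = drop k (\<pi> z)"
  have w: "walk D ws" using walk_drop[OF walkz[OF z] k(1)] ws_def by simp
  have hw: "hd ws = z" using k ws_def by (simp add: hd_drop_conv_nth)
  have lw: "last ws = \<sigma> z" using k ws_def lastz[OF z] by simp
  have sw: "set ws \<subseteq> set (\<pi> z)" using ws_def by (simp add: set_drop_subset)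
  have "cost z ws < cost z (\<pi> z)" using hw h k k0 ws_def unfolding cost_def by auto
  then have "mu Y (\<pi>(z := ws)) < mu Y \<pi>" "Sys D B Y P \<sigma> (\<pi>(z := ws))"
    using Sys_single[OF finY S z w lw _ sw] hw by auto
  then show False using minimal by fastforce
qed

lemma hd_inj: "y1 \<in> Y \<Longrightarrow> y2 \<in> Y \<Longrightarrow> hd (\<pi> y1) = hd (\<pi> y2) \<Longrightarrow> y1 = y2"
  using disj nonempty hd_in_set by metis

lemma no_reassign:
  assumes C: "C \<subseteq> Y" and s: "bij_betw s C C" and ne: "\<forall>z\<in>C. z \<noteq> s z"
    and k: "\<forall>z\<in>C. k z < length (\<pi> (s z)) \<and> (\<pi> (s z) ! k z = z \<or> ((z, \<pi> (s z) ! k z) \<in> B \<and> \<pi> (s z) ! k z \<noteq> z \<and> (k z = 0 \<longrightarrow> \<pi> (s z) ! 0 \<noteq> s z)))"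
    and strict: "\<exists>z\<in>C. \<pi> (s z) ! k z = z \<or> 0 < k z"
  shows False
proof -
  define s' where "s' z = (if z \<in> C then s z else z)" for z
  define \<pi>' where "\<pi>' z = (if z \<in> C then drop (k z) (\<pi> (s z)) else \<pi> z)" for z
  have sC: "z \<in> C \<Longrightarrow> s z \<in> C" for z using s unfolding bij_betw_def by blast
  have sinj: "inj_on s C" using s unfolding bij_betw_def by blast
  have simg: "s ` C = C" using s unfolding bij_betw_def by blast
  have inj': "inj_on s' Y"
  proof (rule inj_onI)
    fix x y assume xy: "x \<in> Y" "y \<in> Y" "s' x = s' y"
    show "x = y"
    proof (cases "x \<in> C")
      case xC: True
      show ?thesis
      proof (cases "y \<in> C")
        case True
        then have "s x = s y" using xC xy(3) unfolding s'_def by simp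
        then show ?thesis using sinj xC True unfolding inj_on_def by blast
      next
        case False
        then have "s x = y" using xC xy(3) unfolding s'_def by simp
        then show ?thesis using sC[OF xC] False by simp
      qed
    next
      case xC: False
      show ?thesis
      proof (cases "y \<in> C")
        case True
        then have "x = s y" using xC xy(3) unfolding s'_def by simp
        then show ?thesis using sC[OF True] xC by simp
      next
        case False
        then show ?thesis using xC xy(3) unfolding s'_def by simp
      qed
    qed
  qed
  have img': "s' ` Y = Y"
  proof
    show "s' ` Y \<subseteq> Y" using C sC unfolding s'_def by auto
    show "Y \<subseteq> s' ` Y"
    proof
      fix y assume y: "y \<in> Y"
      show "y \<in> s' ` Y"
      proof (cases "y \<in> C")
        case True
        then obtain x where x: "x \<in> C" "y = s x" using simg by blast
        then have "s' x = y" unfolding s'_def by simp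
        moreover have "x \<in> Y" using x C by blast
        ultimately show ?thesis by blast
      next
        case False
        then have "s' y = y" unfolding s'_def by simp
        then show ?thesis using y by (metis imageI)
      qed
    qed
  qed
  have bij': "bij_betw s' Y Y" using inj' img' unfolding bij_betw_def by blast
  have sY: "z \<in> Y \<Longrightarrow> s' z \<in> Y" for z using img' by blast
  have sub': "z \<in> Y \<Longrightarrow> set (\<pi>' z) \<subseteq> set (\<pi> (s' z))" for z
    unfolding \<pi>'_def s'_def by (auto simp: set_drop_subset dest: in_set_dropD)
  have Sys': "Sys D B Y P (\<sigma> \<circ> s') \<pi>'"
  proof -
    have a: "bij_betw (\<sigma> \<circ> s') Y P" using bij_betw_trans[OF bij'] S unfolding Sys_def by blast
    have b: "\<forall>z\<in>Y. walk D (\<pi>' z) \<and> last (\<pi>' z) = (\<sigma> \<circ> s') z \<and> ((z, hd (\<pi>' z)) \<in> B \<or> hd (\<pi>' z) = z)"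
    proof
      fix z assume z: "z \<in> Y"
      show "walk D (\<pi>' z) \<and> last (\<pi>' z) = (\<sigma> \<circ> s') z \<and> ((z, hd (\<pi>' z)) \<in> B \<or> hd (\<pi>' z) = z)"
      proof (cases "z \<in> C")
        case True
        have szY: "s z \<in> Y" using sC True C by blast
        have kk: "k z < length (\<pi> (s z))" using k True by blast
        have "walk D (\<pi>' z)" using walk_drop[OF walkz[OF szY] kk] True unfolding \<pi>'_def by simp
        moreover have "last (\<pi>' z) = (\<sigma> \<circ> s') z" using kk lastz[OF szY] True unfolding \<pi>'_def s'_def by simp
        moreover have "hd (\<pi>' z) = \<pi> (s z) ! k z" using kk True unfolding \<pi>'_def by (simp add: hd_drop_conv_nth)
        moreover have "\<pi> (s z) ! k z = z \<or> (z, \<pi> (s z) ! k z) \<in> B" using k True by blast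
        ultimately show ?thesis by auto
      next
        case False
        then have "\<pi>' z = \<pi> z" "s' z = z" unfolding \<pi>'_def s'_def by auto
        then show ?thesis using walkz[OF z] lastz[OF z] hdz[OF z] by simp
      qed
    qed
    have c: "\<forall>z1\<in>Y. \<forall>z2\<in>Y. z1 \<noteq> z2 \<longrightarrow> set (\<pi>' z1) \<inter> set (\<pi>' z2) = {}"
    proof (intro ballI impI)
      fix z1 z2 assume z: "z1 \<in> Y" "z2 \<in> Y" "z1 \<noteq> z2"
      then have "s' z1 \<noteq> s' z2" using inj' unfolding inj_on_def by blast
      then have "set (\<pi> (s' z1)) \<inter> set (\<pi> (s' z2)) = {}" using S sY z unfolding Sys_def by blast
      then show "set (\<pi>' z1) \<inter> set (\<pi>' z2) = {}" using sub' z by blast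
    qed
    show ?thesis using a b c unfolding Sys_def by blast
  qed
  have le: "\<forall>z\<in>Y. cost z (\<pi>' z) \<le> cost (s' z) (\<pi> (s' z))"
  proof
    fix z assume z: "z \<in> Y"
    show "cost z (\<pi>' z) \<le> cost (s' z) (\<pi> (s' z))"
    proof (cases "z \<in> C")
      case True
      have szY: "s z \<in> Y" using sC True C by blast
      have kk: "k z < length (\<pi> (s z))" using k True by blast
      have ne': "\<pi> (s z) \<noteq> []" using nonempty[OF szY] .
      have c1: "cost z (\<pi>' z) = 2 * (length (\<pi> (s z)) - k z) + (if \<pi> (s z) ! k z = z then 0 else 1)"
        using cost_drop[OF kk] True unfolding \<pi>'_def by simp
      have c2: "cost (s' z) (\<pi> (s' z)) = 2 * length (\<pi> (s z)) + (if \<pi> (s z) ! 0 = s z then 0 else 1)"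
        using True ne' unfolding s'_def cost_def by (simp add: hd_conv_nth)
      have kz: "\<pi> (s z) ! k z = z \<or> (\<pi> (s z) ! k z \<noteq> z \<and> (k z = 0 \<longrightarrow> \<pi> (s z) ! 0 \<noteq> s z))"
        using k True by blast
      show ?thesis
      proof (cases "\<pi> (s z) ! k z = z")
        case True then show ?thesis using c1 c2 by simp
      next
        case False
        then have "k z = 0 \<longrightarrow> \<pi> (s z) ! 0 \<noteq> s z" using kz by blast
        then show ?thesis using c1 c2 False kk by (cases "k z = 0") auto
      qed
    next
      case False then show ?thesis unfolding \<pi>'_def s'_def by simp
    qed
  qed
  have lt: "\<exists>z\<in>Y. cost z (\<pi>' z) < cost (s' z) (\<pi> (s' z))"
  proof -
    obtain z where zC: "z \<in> C" and hz: "\<pi> (s z) ! k z = z \<or> 0 < k z" using strict by blast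
    have True': "z \<in> C" using zC .
    have szY: "s z \<in> Y" using sC zC C by blast
    have kk: "k z < length (\<pi> (s z))" using k zC by blast
    have ne': "\<pi> (s z) \<noteq> []" using nonempty[OF szY] .
    have c1: "cost z (\<pi>' z) = 2 * (length (\<pi> (s z)) - k z) + (if \<pi> (s z) ! k z = z then 0 else 1)"
      using cost_drop[OF kk] zC unfolding \<pi>'_def by simp
    have c2: "cost (s' z) (\<pi> (s' z)) = 2 * length (\<pi> (s z)) + (if \<pi> (s z) ! 0 = s z then 0 else 1)"
      using zC ne' unfolding s'_def cost_def by (simp add: hd_conv_nth)
    have "z \<noteq> s z" using ne zC by blast
    then have "cost z (\<pi>' z) < cost (s' z) (\<pi> (s' z))" using c1 c2 hz kk
      by (cases "k z = 0") auto
    then show ?thesis using zC C by blast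
  qed
  have "mu Y \<pi>' < (\<Sum>z\<in>Y. cost (s' z) (\<pi> (s' z)))"
    unfolding mu_def using sum_strict_mono_ex1[OF finY le lt] .
  also have "\<dots> = mu Y \<pi>" unfolding mu_def using sum.reindex_bij_betw[OF bij', of "\<lambda>z. cost z (\<pi> z)"] .
  finally show False using minimal[OF Sys'] by simp
qed

lemma route:
  assumes G: "(z, w) \<in> Grel Y \<pi>"
  shows "\<exists>kk. kk < length (\<pi> w) \<and> (z \<in> set (\<pi> w) \<longrightarrow> \<pi> w ! kk = z) \<and>
     (\<pi> w ! kk = z \<or> (\<pi> w ! kk \<in> Y \<and> hd (\<pi> (\<pi> w ! kk)) \<noteq> \<pi> w ! kk \<and> z = hd (\<pi> (\<pi> w ! kk))))"
proof (cases "z \<in> set (\<pi> w)")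
  case True
  then obtain kk where "kk < length (\<pi> w)" "\<pi> w ! kk = z" by (meson in_set_conv_nth)
  then show ?thesis by blast
next
  case False
  then obtain c where c: "c \<in> Y" "hd (\<pi> c) \<noteq> c" "z = hd (\<pi> c)" "c \<in> set (\<pi> w)"
    using G unfolding Grel_def by blast
  then obtain kk where "kk < length (\<pi> w)" "\<pi> w ! kk = c" by (meson in_set_conv_nth)
  then show ?thesis using c False by blast
qed

lemma gfacts:
  assumes w: "w \<in> Y" and kk: "kk < length (\<pi> w)" and c: "\<pi> w ! kk \<in> Y" "hd (\<pi> (\<pi> w ! kk)) \<noteq> \<pi> w ! kk"
    and z: "z = hd (\<pi> (\<pi> w ! kk))"
  shows "(z, \<pi> w ! kk) \<in> B \<and> \<pi> w ! kk \<noteq> z \<and> (kk = 0 \<longrightarrow> \<pi> w ! 0 \<noteq> w)"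
proof (intro conjI impI)
  have "(\<pi> w ! kk, z) \<in> B" using hdz[OF c(1)] c(2) z by auto
  then show "(z, \<pi> w ! kk) \<in> B" by (rule symB)
  show "\<pi> w ! kk \<noteq> z" using c(2) z by simp
  assume k0: "kk = 0"
  show "\<pi> w ! 0 \<noteq> w"
  proof
    assume "\<pi> w ! 0 = w"
    then have "\<pi> w ! kk = w" using k0 by simp
    then have "z = hd (\<pi> w)" using z by simp
    also have "\<dots> = \<pi> w ! 0" using nonempty[OF w] by (simp add: hd_conv_nth)
    finally show False using c(2) z k0 by simp
  qed
qed

lemma Grel_Y: "(a, w) \<in> Grel Y \<pi> \<Longrightarrow> a \<in> Y \<and> w \<in> Y \<and> a \<noteq> w"
  unfolding Grel_def by blast

lemma acyclic: "(a, a) \<notin> (Grel Y \<pi>)\<^sup>+"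
proof
  assume aa: "(a, a) \<in> (Grel Y \<pi>)\<^sup>+"
  define G where "G = Grel Y \<pi>"
  define C0 where "C0 = {x. (x, x) \<in> G\<^sup>+}"
  have C0Y: "C0 \<subseteq> Y"
  proof
    fix x assume "x \<in> C0"
    then have "(x, x) \<in> G\<^sup>+" unfolding C0_def by simp
    then obtain c where "(x, c) \<in> G" using tranclD by metis
    then show "x \<in> Y" using Grel_Y unfolding G_def by blast
  qed
  have finC0: "finite C0" using C0Y finY finite_subset by blast
  have aC0: "a \<in> C0" using aa unfolding C0_def G_def by simp
  have succ: "\<exists>x'. (x, x') \<in> G \<and> x' \<in> C0" if x: "x \<in> C0" for x
  proof -
    have "(x, x) \<in> G\<^sup>+" using x unfolding C0_def by simp
    then obtain c where c: "(x, c) \<in> G" "(c, x) \<in> G\<^sup>*" using tranclD by metis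
    then have "(c, c) \<in> G\<^sup>+" by (meson rtrancl_into_trancl1)
    then show ?thesis using c unfolding C0_def by blast
  qed
  define s where "s x = (SOME x'. (x, x') \<in> G \<and> x' \<in> C0)" for x
  have sG: "(x, s x) \<in> G \<and> s x \<in> C0" if "x \<in> C0" for x
    unfolding s_def using someI_ex[OF succ[OF that]] .
  have iter: "(s ^^ k) a \<in> C0" for k
    by (induction k) (use aC0 sG in auto)
  have "\<not> inj_on (\<lambda>k. (s ^^ k) a) {..card C0}"
  proof
    assume "inj_on (\<lambda>k. (s ^^ k) a) {..card C0}"
    moreover have "(\<lambda>k. (s ^^ k) a) ` {..card C0} \<subseteq> C0" using iter by blast
    ultimately have "card {..card C0} \<le> card C0" using card_inj_on_le finC0 by blast
    then show False by simp
  qed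
  then obtain i j where ij: "i < j" "(s ^^ i) a = (s ^^ j) a"
    unfolding inj_on_def by (metis linorder_neqE_nat)
  define x0 where "x0 = (s ^^ i) a"
  define p where "p = j - i"
  have p0: "0 < p" using ij unfolding p_def by simp
  have per: "(s ^^ p) x0 = x0"
  proof -
    have "(s ^^ p) x0 = (s ^^ (p + i)) a" unfolding x0_def by (simp add: funpow_add)
    also have "p + i = j" using ij unfolding p_def by simp
    finally show ?thesis using ij unfolding x0_def by simp
  qed
  have x0C0: "(s ^^ k) x0 \<in> C0" for k unfolding x0_def by (metis funpow_add comp_apply iter)
  define Cyc where "Cyc = (\<lambda>k. (s ^^ k) x0) ` {..<p}"
  have CycC0: "Cyc \<subseteq> C0" unfolding Cyc_def using x0C0 by blast
  have CycY: "Cyc \<subseteq> Y" using CycC0 C0Y by blast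
  have finCyc: "finite Cyc" unfolding Cyc_def by simp
  have x0Cyc: "x0 \<in> Cyc" unfolding Cyc_def using p0 by (metis funpow_0 imageI lessThan_iff)
  have simg: "s ` Cyc = Cyc"
  proof
    show "s ` Cyc \<subseteq> Cyc"
    proof
      fix z assume "z \<in> s ` Cyc"
      then obtain k where k: "k < p" "z = s ((s ^^ k) x0)" unfolding Cyc_def by blast
      then have z: "z = (s ^^ Suc k) x0" by simp
      show "z \<in> Cyc"
      proof (cases "Suc k < p")
        case True then show ?thesis using z unfolding Cyc_def by blast
      next
        case False
        then have "Suc k = p" using k by simp
        then have "z = x0" using z per by simp
        then show ?thesis using x0Cyc by simp
      qed
    qed
    show "Cyc \<subseteq> s ` Cyc"
    proof
      fix z assume "z \<in> Cyc"
      then obtain k where k: "k < p" "z = (s ^^ k) x0" unfolding Cyc_def by blast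
      show "z \<in> s ` Cyc"
      proof (cases k)
        case 0
        have "z = (s ^^ p) x0" using k 0 per by simp
        also have "\<dots> = s ((s ^^ (p - 1)) x0)" using p0 by (metis Suc_diff_1 comp_apply funpow.simps(2))
        finally show ?thesis unfolding Cyc_def using p0 by force
      next
        case (Suc k')
        then have "z = s ((s ^^ k') x0)" using k by simp
        then show ?thesis unfolding Cyc_def using k Suc by force
      qed
    qed
  qed
  have sbij: "bij_betw s Cyc Cyc"
    unfolding bij_betw_def using simg eq_card_imp_inj_on[OF finCyc, of s] by simp
  have sGc: "z \<in> Cyc \<Longrightarrow> (z, s z) \<in> G" for z using sG CycC0 by blast
  have ne: "\<forall>z\<in>Cyc. z \<noteq> s z" using sGc Grel_Y unfolding G_def by blast
  define kk where "kk z = (SOME kk. kk < length (\<pi> (s z)) \<and> (z \<in> set (\<pi> (s z)) \<longrightarrow> \<pi> (s z) ! kk = z) \<and>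
     (\<pi> (s z) ! kk = z \<or> (\<pi> (s z) ! kk \<in> Y \<and> hd (\<pi> (\<pi> (s z) ! kk)) \<noteq> \<pi> (s z) ! kk \<and> z = hd (\<pi> (\<pi> (s z) ! kk)))))" for z
  have kkspec: "kk z < length (\<pi> (s z)) \<and> (z \<in> set (\<pi> (s z)) \<longrightarrow> \<pi> (s z) ! kk z = z) \<and>
     (\<pi> (s z) ! kk z = z \<or> (\<pi> (s z) ! kk z \<in> Y \<and> hd (\<pi> (\<pi> (s z) ! kk z)) \<noteq> \<pi> (s z) ! kk z \<and> z = hd (\<pi> (\<pi> (s z) ! kk z))))"
    if z: "z \<in> Cyc" for z
    unfolding kk_def using someI_ex[OF route[OF sGc[OF z, unfolded G_def]]] .
  have szY: "z \<in> Cyc \<Longrightarrow> s z \<in> Y" for z using simg CycY by blast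
  show False
  proof (cases "\<exists>z\<in>Cyc. \<pi> (s z) ! kk z = z \<or> 0 < kk z")
    case True
    have cond: "\<forall>z\<in>Cyc. kk z < length (\<pi> (s z)) \<and> (\<pi> (s z) ! kk z = z \<or> ((z, \<pi> (s z) ! kk z) \<in> B \<and> \<pi> (s z) ! kk z \<noteq> z \<and> (kk z = 0 \<longrightarrow> \<pi> (s z) ! 0 \<noteq> s z)))"
    proof
      fix z assume z: "z \<in> Cyc"
      note sp = kkspec[OF z]
      show "kk z < length (\<pi> (s z)) \<and> (\<pi> (s z) ! kk z = z \<or> ((z, \<pi> (s z) ! kk z) \<in> B \<and> \<pi> (s z) ! kk z \<noteq> z \<and> (kk z = 0 \<longrightarrow> \<pi> (s z) ! 0 \<noteq> s z)))"
      proof (cases "\<pi> (s z) ! kk z = z")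
        case True then show ?thesis using sp by blast
      next
        case False
        then have "\<pi> (s z) ! kk z \<in> Y \<and> hd (\<pi> (\<pi> (s z) ! kk z)) \<noteq> \<pi> (s z) ! kk z \<and> z = hd (\<pi> (\<pi> (s z) ! kk z))"
          using sp by blast
        then show ?thesis using gfacts[OF szY[OF z]] sp by blast
      qed
    qed
    show False using no_reassign[OF CycY sbij ne cond True] .
  next
    case False
    then have all: "\<forall>z\<in>Cyc. \<pi> (s z) ! kk z \<noteq> z \<and> kk z = 0" by auto
    define cz where "cz z = hd (\<pi> (s z))" for z
    have czf: "cz z \<in> Y \<and> hd (\<pi> (cz z)) = z \<and> cz z \<noteq> z \<and> cz z \<noteq> s z" if z: "z \<in> Cyc" for z
    proof -
      have h0: "cz z = \<pi> (s z) ! 0" unfolding cz_def using nonempty[OF szY[OF z]] by (simp add: hd_conv_nth)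
      have sp: "\<pi> (s z) ! kk z \<in> Y \<and> hd (\<pi> (\<pi> (s z) ! kk z)) \<noteq> \<pi> (s z) ! kk z \<and> z = hd (\<pi> (\<pi> (s z) ! kk z))"
        using kkspec[OF z] all z by blast
      have k0: "kk z = 0" using all z by blast
      have g: "(z, \<pi> (s z) ! kk z) \<in> B \<and> \<pi> (s z) ! kk z \<noteq> z \<and> (kk z = 0 \<longrightarrow> \<pi> (s z) ! 0 \<noteq> s z)"
        using gfacts[OF szY[OF z]] kkspec[OF z] sp by blast
      show ?thesis using sp g k0 h0 by simp
    qed
    define W where "W = Cyc \<union> cz ` Cyc"
    have WY: "W \<subseteq> Y" unfolding W_def using CycY czf by blast
    have finW: "finite W" unfolding W_def using finCyc by simp
    define t where "t w = (THE y. y \<in> Y \<and> hd (\<pi> y) = w)" for w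
    have tI: "y \<in> Y \<Longrightarrow> hd (\<pi> y) = w \<Longrightarrow> t w = y" for y w
      unfolding t_def using hd_inj by (intro the_equality) auto
    have t1: "z \<in> Cyc \<Longrightarrow> t z = cz z" for z using tI czf by blast
    have t2: "z \<in> Cyc \<Longrightarrow> t (cz z) = s z" for z using tI szY unfolding cz_def by blast
    have timg: "t ` W = W"
    proof
      show "t ` W \<subseteq> W"
      proof
        fix x assume "x \<in> t ` W"
        then obtain w where w: "w \<in> W" "x = t w" by blast
        show "x \<in> W"
        proof (cases "w \<in> Cyc")
          case True then show ?thesis using w t1 unfolding W_def by auto
        next
          case False
          then obtain z where "z \<in> Cyc" "w = cz z" using w unfolding W_def by blast
          then show ?thesis using w t2 simg unfolding W_def by blast
        qed
      qed
      show "W \<subseteq> t ` W"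
      proof
        fix w assume w: "w \<in> W"
        show "w \<in> t ` W"
        proof (cases "w \<in> Cyc")
          case True
          then obtain z where z: "z \<in> Cyc" "w = s z" using simg by blast
          then have "w = t (cz z)" using t2 by simp
          moreover have "cz z \<in> W" using z unfolding W_def by blast
          ultimately show ?thesis by blast
        next
          case False
          then obtain z where z: "z \<in> Cyc" "w = cz z" using w unfolding W_def by blast
          then have "w = t z" using t1 by simp
          then show ?thesis using z unfolding W_def by blast
        qed
      qed
    qed
    have tbij: "bij_betw t W W"
      unfolding bij_betw_def using timg eq_card_imp_inj_on[OF finW, of t] by simp
    have tprop: "t w \<in> Y \<and> hd (\<pi> (t w)) = w \<and> w \<noteq> t w" if w: "w \<in> W" for w
    proof (cases "w \<in> Cyc")
      case True then show ?thesis using t1[OF True] czf[OF True] by auto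
    next
      case False
      then obtain z where z: "z \<in> Cyc" "w = cz z" using w unfolding W_def by blast
      then show ?thesis using t2 czf szY unfolding cz_def by simp
    qed
    have ne2: "\<forall>w\<in>W. w \<noteq> t w" using tprop by blast
    have cond2: "\<forall>w\<in>W. (0::nat) < length (\<pi> (t w)) \<and> (\<pi> (t w) ! 0 = w \<or> ((w, \<pi> (t w) ! 0) \<in> B \<and> \<pi> (t w) ! 0 \<noteq> w \<and> (0 = (0::nat) \<longrightarrow> \<pi> (t w) ! 0 \<noteq> t w)))"
    proof
      fix w assume w: "w \<in> W"
      have "\<pi> (t w) \<noteq> []" using tprop[OF w] nonempty by blast
      then show "(0::nat) < length (\<pi> (t w)) \<and> (\<pi> (t w) ! 0 = w \<or> ((w, \<pi> (t w) ! 0) \<in> B \<and> \<pi> (t w) ! 0 \<noteq> w \<and> (0 = (0::nat) \<longrightarrow> \<pi> (t w) ! 0 \<noteq> t w)))"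
        using tprop[OF w] by (simp add: hd_conv_nth)
    qed
    have strict2: "\<exists>w\<in>W. \<pi> (t w) ! 0 = w \<or> (0::nat) < 0"
    proof -
      have "x0 \<in> W" using x0Cyc unfolding W_def by blast
      moreover have "\<pi> (t x0) ! 0 = x0" using tprop[OF \<open>x0 \<in> W\<close>] nonempty by (metis hd_conv_nth)
      ultimately show ?thesis by blast
    qed
    show False using no_reassign[OF WY tbij ne2 cond2 strict2] .
  qed
qed

end


lemma mult_entry:
  assumes "A \<in> carrier_mat n k" "B \<in> carrier_mat k n'" "a < n" "b < n'"
  shows "(A * B) $$ (a, b) = (\<Sum>c\<in>{0..<k}. A $$ (a, c) * B $$ (c, b))"
  using assms by (simp add: scalar_prod_def)

lemma sum_single:
  assumes "finite S" "c0 \<in> S" "\<And>c. c \<in> S \<Longrightarrow> c \<noteq> c0 \<Longrightarrow> f c = 0"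
  shows "sum f S = f c0"
proof -
  have "sum f S = f c0 + sum f (S - {c0})" using assms by (simp add: sum.remove)
  also have "sum f (S - {c0}) = 0" using assms by (intro sum.neutral) auto
  finally show ?thesis by simp
qed

lemma mat_inv_eq:
  assumes A: "A \<in> carrier_mat m m" and C: "C \<in> carrier_mat m m"
    and AC: "A * C = 1\<^sub>m m" and CA: "C * A = 1\<^sub>m m"
  shows "mat_inv m A = C"
  unfolding mat_inv_def
proof (rule the_equality)
  show "C \<in> carrier_mat m m \<and> A * C = 1\<^sub>m m \<and> C * A = 1\<^sub>m m" using assms by simp
  fix C' assume h: "C' \<in> carrier_mat m m \<and> A * C' = 1\<^sub>m m \<and> C' * A = 1\<^sub>m m"
  have "C' = C' * (A * C)" using h AC right_mult_one_mat[of C' m m] by simp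
  also have "\<dots> = (C' * A) * C" using h A C by (metis assoc_mult_mat)
  also have "\<dots> = C" using h C by simp
  finally show "C' = C" .
qed

locale wsys = minsys +
  fixes m :: nat
  assumes Ym: "Y \<subseteq> {0..<m}" and Dm: "D \<subseteq> {0..<m} \<times> {0..<m}" and Bm: "B \<subseteq> {0..<m} \<times> {0..<m}"
    and m0: "0 < m"
begin

lemma nodes_m: "z \<in> Y \<Longrightarrow> x \<in> set (\<pi> z) \<Longrightarrow> x < m"
proof -
  assume z: "z \<in> Y" and x: "x \<in> set (\<pi> z)"
  obtain i where i: "i < length (\<pi> z)" "\<pi> z ! i = x" using x by (meson in_set_conv_nth)
  show "x < m"
  proof (cases i)
    case 0
    then have "x = hd (\<pi> z)" using i nonempty[OF z] by (simp add: hd_conv_nth)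
    then show ?thesis using hdz[OF z] z Ym Bm by auto
  next
    case (Suc j)
    then have "(\<pi> z ! j, \<pi> z ! Suc j) \<in> D" using walk_nth[OF walkz[OF z], of j] i by simp
    then show ?thesis using Dm i Suc by auto
  qed
qed

lemma pos_unique:
  assumes "z \<in> Y" "z' \<in> Y" "i < length (\<pi> z)" "i' < length (\<pi> z')" "\<pi> z ! i = \<pi> z' ! i'"
  shows "z = z' \<and> i = i'"
proof -
  have "z = z'" using assms disj by (metis nth_mem)
  then show ?thesis using assms distinct_paths nth_eq_iff_index_eq by metis
qed

definition before :: "nat \<Rightarrow> nat \<Rightarrow> bool" where
  "before a b \<longleftrightarrow> (\<exists>z\<in>Y. \<exists>i j. i < j \<and> j < length (\<pi> z) \<and> \<pi> z ! i = a \<and> \<pi> z ! j = b)"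
definition edge :: "nat \<Rightarrow> nat \<Rightarrow> bool" where
  "edge a b \<longleftrightarrow> (\<exists>z\<in>Y. \<exists>i. Suc i < length (\<pi> z) \<and> \<pi> z ! i = a \<and> \<pi> z ! Suc i = b)"
definition bid :: "nat \<Rightarrow> bool" where
  "bid z \<longleftrightarrow> z \<in> Y \<and> hd (\<pi> z) \<noteq> z"
definition pair :: "nat \<Rightarrow> nat \<Rightarrow> bool" where
  "pair a b \<longleftrightarrow> a \<noteq> b \<and> ((bid a \<and> b = hd (\<pi> a)) \<or> (bid b \<and> a = hd (\<pi> b)))"
definition ee :: real where "ee = 1 / (2 * real m)"
definition Lam :: "real mat" where "Lam = mat m m (\<lambda>(a,b). if edge a b then 1 else 0)"
definition Nm :: "real mat" where "Nm = mat m m (\<lambda>(a,b). if a = b \<or> before a b then 1 else 0)"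
definition Om :: "real mat" where "Om = mat m m (\<lambda>(a,b). if a = b then 1 else if pair a b then ee else 0)"

lemma ee_pos: "0 < ee" unfolding ee_def using m0 by simp

lemma before_irrefl: "\<not> before a a"
  unfolding before_def using distinct_paths by (metis nat_neq_iff nth_eq_iff_index_eq order.strict_trans)

lemma edge_after:
  assumes e: "edge a c"
  shows "(before a b \<longleftrightarrow> c = b \<or> before c b) \<and> c \<noteq> a \<and> \<not> before c a"
proof -
  obtain z i where zi: "z \<in> Y" "Suc i < length (\<pi> z)" "\<pi> z ! i = a" "\<pi> z ! Suc i = c"
    using e unfolding edge_def by blast
  have at_a: "z' \<in> Y \<Longrightarrow> i' < length (\<pi> z') \<Longrightarrow> \<pi> z' ! i' = a \<Longrightarrow> z' = z \<and> i' = i" for z' i'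
    using pos_unique[of z' z i' i] zi by auto
  have at_c: "z' \<in> Y \<Longrightarrow> i' < length (\<pi> z') \<Longrightarrow> \<pi> z' ! i' = c \<Longrightarrow> z' = z \<and> i' = Suc i" for z' i'
    using pos_unique[of z' z i' "Suc i"] zi by auto
  have 1: "before a b \<longleftrightarrow> c = b \<or> before c b"
  proof
    assume "before a b"
    then obtain z' i' j where h: "z' \<in> Y" "i' < j" "j < length (\<pi> z')" "\<pi> z' ! i' = a" "\<pi> z' ! j = b"
      unfolding before_def by blast
    then have "z' = z" "i' = i" using at_a[of z' i'] by auto
    then show "c = b \<or> before c b"
      using h zi unfolding before_def
      by (metis Suc_lessI)
  next
    assume "c = b \<or> before c b"
    then show "before a b"
    proof
      assume "c = b" then show ?thesis using zi unfolding before_def by blast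
    next
      assume "before c b"
      then obtain z' i' j where h: "z' \<in> Y" "i' < j" "j < length (\<pi> z')" "\<pi> z' ! i' = c" "\<pi> z' ! j = b"
        unfolding before_def by blast
      then have "z' = z" "i' = Suc i" using at_c[of z' i'] by auto
      then show ?thesis using h zi unfolding before_def by (metis Suc_lessD less_trans_Suc)
    qed
  qed
  have 2: "c \<noteq> a" using at_c[of z i] zi by auto
  have 3: "\<not> before c a"
  proof
    assume "before c a"
    then obtain z' i' j where h: "z' \<in> Y" "i' < j" "j < length (\<pi> z')" "\<pi> z' ! i' = c" "\<pi> z' ! j = a"
      unfolding before_def by blast
    then have "z' = z" "i' = Suc i" using at_c[of z' i'] by auto
    moreover have "j = i" using at_a[of z' j] h by auto
    ultimately show False using h by simp
  qed
  show ?thesis using 1 2 3 by blast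
qed

lemma edge_before:
  assumes e: "edge c b"
  shows "(before a b \<longleftrightarrow> a = c \<or> before a c) \<and> c \<noteq> b \<and> \<not> before b c"
proof -
  obtain z i where zi: "z \<in> Y" "Suc i < length (\<pi> z)" "\<pi> z ! i = c" "\<pi> z ! Suc i = b"
    using e unfolding edge_def by blast
  have at_c: "z' \<in> Y \<Longrightarrow> i' < length (\<pi> z') \<Longrightarrow> \<pi> z' ! i' = c \<Longrightarrow> z' = z \<and> i' = i" for z' i'
    using pos_unique[of z' z i' i] zi by auto
  have at_b: "z' \<in> Y \<Longrightarrow> i' < length (\<pi> z') \<Longrightarrow> \<pi> z' ! i' = b \<Longrightarrow> z' = z \<and> i' = Suc i" for z' i'
    using pos_unique[of z' z i' "Suc i"] zi by auto
  have 1: "before a b \<longleftrightarrow> a = c \<or> before a c"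
  proof
    assume "before a b"
    then obtain z' i' j where h: "z' \<in> Y" "i' < j" "j < length (\<pi> z')" "\<pi> z' ! i' = a" "\<pi> z' ! j = b"
      unfolding before_def by blast
    then have "z' = z" "j = Suc i" using at_b[of z' j] by auto
    then show "a = c \<or> before a c"
      using h zi unfolding before_def by (metis Suc_lessD less_Suc_eq)
  next
    assume "a = c \<or> before a c"
    then show "before a b"
    proof
      assume "a = c" then show ?thesis using zi unfolding before_def by blast
    next
      assume "before a c"
      then obtain z' i' j where h: "z' \<in> Y" "i' < j" "j < length (\<pi> z')" "\<pi> z' ! i' = a" "\<pi> z' ! j = c"
        unfolding before_def by blast
      then have "z' = z" "j = i" using at_c[of z' j] by auto
      then show ?thesis using h zi unfolding before_def by (metis less_SucI)
    qed
  qed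
  have 2: "c \<noteq> b" using at_b[of z i] zi by auto
  have 3: "\<not> before b c"
  proof
    assume "before b c"
    then obtain z' i' j where h: "z' \<in> Y" "i' < j" "j < length (\<pi> z')" "\<pi> z' ! i' = b" "\<pi> z' ! j = c"
      unfolding before_def by blast
    then have "z' = z" "i' = Suc i" using at_b[of z' i'] by auto
    moreover have "j = i" using at_c[of z' j] h by auto
    ultimately show False using h by simp
  qed
  show ?thesis using 1 2 3 by blast
qed

lemma no_edge_from: "\<not> (\<exists>c. edge a c) \<Longrightarrow> \<not> before a b"
  unfolding before_def edge_def by (metis Suc_lessI less_trans_Suc)

lemma no_edge_to: "\<not> (\<exists>c. edge c b) \<Longrightarrow> \<not> before a b"
  unfolding before_def edge_def by (metis Suc_pred less_imp_Suc_add zero_less_Suc less_nat_zero_code not_less0 diff_Suc_1 less_trans_Suc Suc_lessD order.strict_trans2 gr0_conv_Suc)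

lemma edge_m: "edge a b \<Longrightarrow> a < m \<and> b < m"
  unfolding edge_def using nodes_m by (metis Suc_lessD nth_mem)

lemma edge_fun: "edge a c \<Longrightarrow> edge a c' \<Longrightarrow> c = c'"
  unfolding edge_def using pos_unique by (metis Suc_lessD)

lemma edge_fun2: "edge c b \<Longrightarrow> edge c' b \<Longrightarrow> c = c'"
  unfolding edge_def using pos_unique by (metis Suc_inject Suc_lessD)

lemma Lam_carrier: "Lam \<in> carrier_mat m m" unfolding Lam_def by simp
lemma Nm_carrier: "Nm \<in> carrier_mat m m" unfolding Nm_def by simp
lemma Om_carrier: "Om \<in> carrier_mat m m" unfolding Om_def by simp
lemma Lam_idx: "a < m \<Longrightarrow> b < m \<Longrightarrow> Lam $$ (a,b) = (if edge a b then 1 else 0)" unfolding Lam_def by simp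
lemma Nm_idx: "a < m \<Longrightarrow> b < m \<Longrightarrow> Nm $$ (a,b) = (if a = b \<or> before a b then 1 else 0)" unfolding Nm_def by simp
lemma Om_idx: "a < m \<Longrightarrow> b < m \<Longrightarrow> Om $$ (a,b) = (if a = b then 1 else if pair a b then ee else 0)" unfolding Om_def by simp

lemma IL_carrier: "1\<^sub>m m - Lam \<in> carrier_mat m m" using Lam_carrier unfolding carrier_mat_def by simp

lemma inv_left: "(1\<^sub>m m - Lam) * Nm = 1\<^sub>m m"
proof (rule eq_matI)
  show "dim_row ((1\<^sub>m m - Lam) * Nm) = dim_row (1\<^sub>m m)" "dim_col ((1\<^sub>m m - Lam) * Nm) = dim_col (1\<^sub>m m)"
    using Lam_carrier Nm_carrier by auto
  fix a b assume "a < dim_row (1\<^sub>m m :: real mat)" "b < dim_col (1\<^sub>m m :: real mat)"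
  then have ab: "a < m" "b < m" by auto
  have "((1\<^sub>m m - Lam) * Nm) $$ (a, b) = (\<Sum>c\<in>{0..<m}. (1\<^sub>m m - Lam) $$ (a, c) * Nm $$ (c, b))"
    using mult_entry[of "1\<^sub>m m - Lam" m m Nm m a b] IL_carrier Nm_carrier ab by simp
  also have "\<dots> = (\<Sum>c\<in>{0..<m}. (if a = c then Nm $$ (c, b) else 0) - Lam $$ (a, c) * Nm $$ (c, b))"
    using ab Lam_carrier by (intro sum.cong) (auto simp: left_diff_distrib)
  also have "\<dots> = (\<Sum>c\<in>{0..<m}. (if a = c then Nm $$ (c, b) else 0)) - (\<Sum>c\<in>{0..<m}. Lam $$ (a, c) * Nm $$ (c, b))"
    by (simp add: sum_subtractf)
  also have "(\<Sum>c\<in>{0..<m}. (if a = c then Nm $$ (c, b) else 0)) = Nm $$ (a, b)"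
    using ab by (subst sum_single[of _ a]) auto
  finally have eq: "((1\<^sub>m m - Lam) * Nm) $$ (a, b) = Nm $$ (a, b) - (\<Sum>c\<in>{0..<m}. Lam $$ (a, c) * Nm $$ (c, b))" .
  show "((1\<^sub>m m - Lam) * Nm) $$ (a, b) = 1\<^sub>m m $$ (a, b)"
  proof (cases "\<exists>c. edge a c")
    case True
    then obtain c0 where c0: "edge a c0" by blast
    have c0m: "c0 < m" using edge_m[OF c0] by simp
    have "(\<Sum>c\<in>{0..<m}. Lam $$ (a, c) * Nm $$ (c, b)) = Lam $$ (a, c0) * Nm $$ (c0, b)"
      using c0m ab edge_fun[OF c0] by (subst sum_single[of _ c0]) (auto simp: Lam_idx)
    also have "\<dots> = Nm $$ (c0, b)" using c0 c0m ab by (simp add: Lam_idx)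
    finally show ?thesis using eq edge_after[OF c0, of b] ab c0m by (auto simp: Nm_idx)
  next
    case False
    then have "(\<Sum>c\<in>{0..<m}. Lam $$ (a, c) * Nm $$ (c, b)) = 0"
      using ab by (intro sum.neutral) (auto simp: Lam_idx)
    then show ?thesis using eq no_edge_from[OF False, of b] ab by (simp add: Nm_idx)
  qed
qed

lemma inv_right: "Nm * (1\<^sub>m m - Lam) = 1\<^sub>m m"
proof (rule eq_matI)
  show "dim_row (Nm * (1\<^sub>m m - Lam)) = dim_row (1\<^sub>m m)" "dim_col (Nm * (1\<^sub>m m - Lam)) = dim_col (1\<^sub>m m)"
    using Lam_carrier Nm_carrier by auto
  fix a b assume "a < dim_row (1\<^sub>m m :: real mat)" "b < dim_col (1\<^sub>m m :: real mat)"
  then have ab: "a < m" "b < m" by auto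
  have "(Nm * (1\<^sub>m m - Lam)) $$ (a, b) = (\<Sum>c\<in>{0..<m}. Nm $$ (a, c) * (1\<^sub>m m - Lam) $$ (c, b))"
    using mult_entry[of Nm m m "1\<^sub>m m - Lam" m a b] IL_carrier Nm_carrier ab by simp
  also have "\<dots> = (\<Sum>c\<in>{0..<m}. (if c = b then Nm $$ (a, c) else 0) - Nm $$ (a, c) * Lam $$ (c, b))"
    using ab Lam_carrier by (intro sum.cong) (auto simp: right_diff_distrib)
  also have "\<dots> = (\<Sum>c\<in>{0..<m}. (if c = b then Nm $$ (a, c) else 0)) - (\<Sum>c\<in>{0..<m}. Nm $$ (a, c) * Lam $$ (c, b))"
    by (simp add: sum_subtractf)
  also have "(\<Sum>c\<in>{0..<m}. (if c = b then Nm $$ (a, c) else 0)) = Nm $$ (a, b)"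
    using ab by (subst sum_single[of _ b]) auto
  finally have eq: "(Nm * (1\<^sub>m m - Lam)) $$ (a, b) = Nm $$ (a, b) - (\<Sum>c\<in>{0..<m}. Nm $$ (a, c) * Lam $$ (c, b))" .
  show "(Nm * (1\<^sub>m m - Lam)) $$ (a, b) = 1\<^sub>m m $$ (a, b)"
  proof (cases "\<exists>c. edge c b")
    case True
    then obtain c0 where c0: "edge c0 b" by blast
    have c0m: "c0 < m" using edge_m[OF c0] by simp
    have "(\<Sum>c\<in>{0..<m}. Nm $$ (a, c) * Lam $$ (c, b)) = Nm $$ (a, c0) * Lam $$ (c0, b)"
      using c0m ab edge_fun2[OF c0] by (subst sum_single[of _ c0]) (auto simp: Lam_idx)
    also have "\<dots> = Nm $$ (a, c0)" using c0 c0m ab by (simp add: Lam_idx)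
    finally show ?thesis using eq edge_before[OF c0, of a] ab c0m by (auto simp: Nm_idx)
  next
    case False
    then have "(\<Sum>c\<in>{0..<m}. Nm $$ (a, c) * Lam $$ (c, b)) = 0"
      using ab by (intro sum.neutral) (auto simp: Lam_idx)
    then show ?thesis using eq no_edge_to[OF False, of a] ab by (simp add: Nm_idx)
  qed
qed

lemma matinv_Nm: "mat_inv m (1\<^sub>m m - Lam) = Nm"
  using mat_inv_eq[OF IL_carrier Nm_carrier inv_left inv_right] .

lemma pair_sym: "pair a b \<longleftrightarrow> pair b a" unfolding pair_def by blast

lemma pair_B: "pair a b \<Longrightarrow> (a, b) \<in> B"
proof -
  assume p: "pair a b"
  show "(a, b) \<in> B"
  proof (cases "bid a \<and> b = hd (\<pi> a)")
    case True then show ?thesis using hdz unfolding bid_def by auto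
  next
    case False
    then have "bid b \<and> a = hd (\<pi> b)" using p unfolding pair_def by blast
    then have "(b, a) \<in> B" using hdz unfolding bid_def by auto
    then show ?thesis by (rule symB)
  qed
qed

lemma edge_D: "edge a b \<Longrightarrow> (a, b) \<in> D"
  unfolding edge_def using walk_nth walkz by blast

lemma Om_sym: "Om\<^sup>T = Om"
  by (rule eq_matI) (auto simp: Om_def pair_sym)

lemma Om_pd: "pos_def_mat Om"
  unfolding pos_def_mat_def
proof (intro ballI impI)
  fix x :: "real vec" assume x: "x \<in> carrier_vec (dim_row Om)" "x \<noteq> 0\<^sub>v (dim_row Om)"
  have dx: "dim_vec x = m" using x Om_carrier by auto
  define S where "S = (\<Sum>i\<in>{0..<m}. (x $ i)\<^sup>2)"
  have Spos: "0 < S"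
  proof -
    obtain i where i: "i < m" "x $ i \<noteq> 0" using x dx Om_carrier by (metis carrier_matD(1) eq_vecI index_zero_vec(1,2))
    have "0 < (x $ i)\<^sup>2" using i by simp
    also have "\<dots> \<le> S" unfolding S_def using i by (intro member_le_sum) auto
    finally show ?thesis .
  qed
  have Q: "x \<bullet> (Om *\<^sub>v x) = (\<Sum>i\<in>{0..<m}. \<Sum>j\<in>{0..<m}. x $ i * (Om $$ (i, j) * x $ j))"
    using dx Om_carrier by (simp add: scalar_prod_def sum_distrib_left)
  have termb: "x $ i * (Om $$ (i, j) * x $ j) \<ge> (if i = j then (x $ i)\<^sup>2 else 0) - ee / 2 * (x $ i)\<^sup>2 - ee / 2 * (x $ j)\<^sup>2"
    if ij: "i < m" "j < m" for i j
  proof (cases "i = j")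
    case True
    then show ?thesis using ij ee_pos by (simp add: Om_idx power2_eq_square)
  next
    case False
    have o: "0 \<le> Om $$ (i, j) \<and> Om $$ (i, j) \<le> ee" using ij False ee_pos by (simp add: Om_idx)
    define a where "a = x $ i"
    define b where "b = x $ j"
    define oo where "oo = Om $$ (i, j)"
    have ab: "\<bar>a * b\<bar> \<le> (a\<^sup>2 + b\<^sup>2) / 2"
    proof -
      have "0 \<le> (\<bar>a\<bar> - \<bar>b\<bar>)\<^sup>2" by simp
      then have "0 \<le> a\<^sup>2 + b\<^sup>2 - 2 * \<bar>a\<bar> * \<bar>b\<bar>" by (simp add: power2_diff)
      then show ?thesis by (simp add: abs_mult)
    qed
    have o': "0 \<le> oo" "oo \<le> ee" using o unfolding oo_def by auto
    have s1: "oo * (a * b) \<ge> oo * (- \<bar>a * b\<bar>)" using o' by (intro mult_left_mono) auto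
    have s2: "oo * \<bar>a * b\<bar> \<le> ee * \<bar>a * b\<bar>" using o' by (intro mult_right_mono) auto
    have s3: "ee * \<bar>a * b\<bar> \<le> ee * ((a\<^sup>2 + b\<^sup>2) / 2)" using ab ee_pos by (intro mult_left_mono) auto
    have "a * (oo * b) \<ge> - ee * ((a\<^sup>2 + b\<^sup>2) / 2)" using s1 s2 s3 by (simp add: algebra_simps)
    then have "x $ i * (Om $$ (i, j) * x $ j) \<ge> - ee * (((x $ i)\<^sup>2 + (x $ j)\<^sup>2) / 2)"
      unfolding a_def b_def oo_def .
    then show ?thesis using False by (simp add: field_simps)
  qed
  have "(\<Sum>i\<in>{0..<m}. \<Sum>j\<in>{0..<m}. x $ i * (Om $$ (i, j) * x $ j))
      \<ge> (\<Sum>i\<in>{0..<m}. \<Sum>j\<in>{0..<m}. (if i = j then (x $ i)\<^sup>2 else 0) - ee / 2 * (x $ i)\<^sup>2 - ee / 2 * (x $ j)\<^sup>2)"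
    using termb by (intro sum_mono) auto
  also have "(\<Sum>i\<in>{0..<m}. \<Sum>j\<in>{0..<m}. (if i = j then (x $ i)\<^sup>2 else 0) - ee / 2 * (x $ i)\<^sup>2 - ee / 2 * (x $ j)\<^sup>2)
      = (\<Sum>i\<in>{0..<m}. (x $ i)\<^sup>2 - ee / 2 * real m * (x $ i)\<^sup>2 - ee / 2 * S)"
    unfolding S_def by (intro sum.cong) (auto simp: sum_subtractf sum_distrib_left)
  also have "\<dots> = S - ee / 2 * real m * S - real m * (ee / 2 * S)"
  proof -
    have h1: "(\<Sum>i\<in>{0..<m}. ee / 2 * real m * (x $ i)\<^sup>2) = ee / 2 * real m * S"
      unfolding S_def by (rule sum_distrib_left[symmetric])
    have h2: "(\<Sum>i\<in>{0..<m}. ee / 2 * S) = real m * (ee / 2 * S)" by simp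
    have h3: "(\<Sum>i\<in>{0..<m}. (x $ i)\<^sup>2 - ee / 2 * real m * (x $ i)\<^sup>2 - ee / 2 * S)
      = (\<Sum>i\<in>{0..<m}. (x $ i)\<^sup>2) - (\<Sum>i\<in>{0..<m}. ee / 2 * real m * (x $ i)\<^sup>2) - (\<Sum>i\<in>{0..<m}. ee / 2 * S)"
      by (simp only: sum_subtractf)
    show ?thesis unfolding h3 h1 h2 S_def[symmetric] ..
  qed
  also have "\<dots> = S / 2" unfolding ee_def using m0 by (simp add: field_simps)
  finally show "0 < x \<bullet> (Om *\<^sub>v x)" using Q Spos by simp
qed

lemma in_Theta: "(Lam, Om) \<in> Theta m D B"
  unfolding Theta_def
proof (clarify, intro conjI allI impI)
  show "Lam \<in> carrier_mat m m" by (rule Lam_carrier)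
  show "Om \<in> carrier_mat m m" by (rule Om_carrier)
  show "Om\<^sup>T = Om" by (rule Om_sym)
  show "pos_def_mat Om" by (rule Om_pd)
  show "invertible_mat (1\<^sub>m m - Lam)"
    unfolding invertible_mat_def inverts_mat_def square_mat.simps using inv_left inv_right IL_carrier Nm_carrier Lam_carrier
    by (auto intro!: exI[of _ Nm])
next
  fix i j assume "i < m" "j < m" "(i, j) \<notin> D"
  then show "Lam $$ (i, j) = 0" using edge_D by (auto simp: Lam_idx)
next
  fix i j assume "i < m" "j < m" "i \<noteq> j \<and> (i, j) \<notin> B"
  then show "Om $$ (i, j) = 0" using pair_B by (auto simp: Om_idx)
qed

definition Urel :: "(nat \<times> nat) set" where
  "Urel = {(a, w). a \<in> Y \<and> w \<in> Y \<and> before w a}"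

lemma before_path: "before u a \<Longrightarrow> \<exists>x\<in>Y. \<exists>i j. i < j \<and> j < length (\<pi> x) \<and> \<pi> x ! i = u \<and> \<pi> x ! j = a"
  unfolding before_def by blast

lemma before_trans: "before a b \<Longrightarrow> before b c \<Longrightarrow> before a c"
proof -
  assume ab: "before a b" and bc: "before b c"
  obtain x i j where h1: "x \<in> Y" "i < j" "j < length (\<pi> x)" "\<pi> x ! i = a" "\<pi> x ! j = b"
    using ab unfolding before_def by blast
  obtain x' i' j' where h2: "x' \<in> Y" "i' < j'" "j' < length (\<pi> x')" "\<pi> x' ! i' = b" "\<pi> x' ! j' = c"
    using bc unfolding before_def by blast
  have "x = x' \<and> j = i'" using pos_unique[of x x' j i'] h1 h2 by auto
  then show "before a c" using h1 h2 unfolding before_def by (metis order.strict_trans)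
qed

lemma Nm_last: "w \<in> Y \<Longrightarrow> (c = \<sigma> w \<or> before c (\<sigma> w)) \<longleftrightarrow> c \<in> set (\<pi> w)"
proof -
  assume w: "w \<in> Y"
  have ne: "\<pi> w \<noteq> []" using nonempty[OF w] .
  have sl: "\<sigma> w = \<pi> w ! (length (\<pi> w) - 1)" using lastz[OF w] ne by (simp add: last_conv_nth)
  show ?thesis
  proof
    assume "c = \<sigma> w \<or> before c (\<sigma> w)"
    then show "c \<in> set (\<pi> w)"
    proof
      assume "c = \<sigma> w" then show ?thesis using lastz[OF w] ne by (metis last_in_set)
    next
      assume "before c (\<sigma> w)"
      then obtain x i j where h: "x \<in> Y" "i < j" "j < length (\<pi> x)" "\<pi> x ! i = c" "\<pi> x ! j = \<sigma> w"
        unfolding before_def by blast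
      have "\<sigma> w \<in> set (\<pi> w)" using lastz[OF w] ne by (metis last_in_set)
      then have "x = w" using h disj w by (metis nth_mem)
      then show ?thesis using h by (metis nth_mem order.strict_trans)
    qed
  next
    assume "c \<in> set (\<pi> w)"
    then obtain i where i: "i < length (\<pi> w)" "\<pi> w ! i = c" by (meson in_set_conv_nth)
    show "c = \<sigma> w \<or> before c (\<sigma> w)"
    proof (cases "i = length (\<pi> w) - 1")
      case True then show ?thesis using i sl by simp
    next
      case False
      then have "i < length (\<pi> w) - 1" using i by simp
      then have "before c (\<sigma> w)" unfolding before_def using w i sl
        by (intro bexI[of _ w] exI[of _ i] exI[of _ "length (\<pi> w) - 1"]) auto
      then show ?thesis by blast
    qed
  qed
qed

lemma sig_m: "w \<in> Y \<Longrightarrow> \<sigma> w < m"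
  using lastz nonempty nodes_m by (metis last_in_set)

lemma S_edge:
  assumes a: "a \<in> Y" and w: "w \<in> Y" and aw: "a \<noteq> w"
    and ua: "u = a \<or> before u a" and uc: "u = c \<or> pair u c" and cw: "c \<in> set (\<pi> w)"
  shows "(a, w) \<in> (Grel Y \<pi> \<union> Urel)\<^sup>+"
proof -
  have G: "(x, x') \<in> Grel Y \<pi> \<Longrightarrow> (x, x') \<in> (Grel Y \<pi> \<union> Urel)\<^sup>+" for x x' by auto
  show ?thesis
  proof (cases "u = a")
    case ua': True
    show ?thesis
    proof (cases "u = c")
      case True
      then have "a \<in> set (\<pi> w)" using ua' cw by simp
      then show ?thesis using a w aw G unfolding Grel_def by blast
    next
      case False
      then have p: "pair a c" using uc ua' by simp
      show ?thesis
      proof (cases "bid a \<and> c = hd (\<pi> a)")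
        case True
        then have "c \<in> set (\<pi> a)" using nonempty[OF a] by simp
        then have "a = w" using disj a w cw by blast
        then show ?thesis using aw by simp
      next
        case False
        then have "bid c \<and> a = hd (\<pi> c)" using p unfolding pair_def by blast
        then show ?thesis using a w aw cw G unfolding Grel_def bid_def by blast
      qed
    qed
  next
    case False
    then have bua: "before u a" using ua by simp
    obtain x i j where h: "x \<in> Y" "i < j" "j < length (\<pi> x)" "\<pi> x ! i = u" "\<pi> x ! j = a"
      using before_path[OF bua] by blast
    have ux: "u \<in> set (\<pi> x)" using h by (metis nth_mem order.strict_trans)
    have ax: "a \<in> set (\<pi> x)" using h by (metis nth_mem)
    show ?thesis
    proof (cases "u = c")
      case True
      then have "x = w" using ux cw disj h w by blast
      then show ?thesis using ax a w aw G unfolding Grel_def by blast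
    next
      case False
      then have p: "pair u c" using uc by simp
      show ?thesis
      proof (cases "bid u \<and> c = hd (\<pi> u)")
        case True
        then have uY: "u \<in> Y" unfolding bid_def by blast
        have "c \<in> set (\<pi> u)" using True nonempty[OF uY] by simp
        then have "u = w" using disj uY w cw by blast
        then have "(a, w) \<in> Urel" using bua a w unfolding Urel_def by simp
        then show ?thesis by auto
      next
        case False
        then have bc: "bid c \<and> u = hd (\<pi> c)" using p unfolding pair_def by blast
        then have cY: "c \<in> Y" unfolding bid_def by blast
        have "u \<in> set (\<pi> c)" using bc nonempty[OF cY] by simp
        then have cx: "c = x" using disj cY h ux by blast
        show ?thesis
        proof (cases "a = c")
          case True
          then show ?thesis using cw a w aw G unfolding Grel_def by blast
        next
          case False
          have g1: "(a, c) \<in> Grel Y \<pi>" using ax cx a cY False unfolding Grel_def by blast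
          have cw': "c \<noteq> w"
          proof
            assume "c = w"
            then have "hd (\<pi> c) = c" using selfhd cY cw by blast
            then show False using bc unfolding bid_def by blast
          qed
          have g2: "(c, w) \<in> Grel Y \<pi>" using cw cY w cw' unfolding Grel_def by blast
          show ?thesis using g1 g2 by (meson UnI1 r_into_trancl trancl.trancl_into_trancl)
        qed
      qed
    qed
  qed
qed

lemma absorb1:
  assumes yu: "(y, u) \<in> Urel" and uw: "(u, w) \<in> Grel Y \<pi>"
  shows "(y, w) \<in> (Grel Y \<pi>)\<^sup>+"
proof -
  have y: "y \<in> Y" and uY: "u \<in> Y" and bu: "before u y" using yu unfolding Urel_def by auto
  obtain x i j where h: "x \<in> Y" "i < j" "j < length (\<pi> x)" "\<pi> x ! i = u" "\<pi> x ! j = y"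
    using before_path[OF bu] by blast
  have ux: "u \<in> set (\<pi> x)" using h by (metis nth_mem order.strict_trans)
  have yx: "y \<in> set (\<pi> x)" using h by (metis nth_mem)
  have ynx: "y \<noteq> x"
  proof
    assume yx': "y = x"
    then have "hd (\<pi> x) = y" using selfhd h yx by blast
    moreover have ne: "\<pi> x \<noteq> []" using h(3) by auto
    ultimately have "\<pi> x ! 0 = \<pi> x ! j" using h(5) by (simp add: hd_conv_nth)
    moreover have "0 < length (\<pi> x)" using le_less_trans[OF le0 h(3)] .
    ultimately have "0 = j" using pos_unique[of x x 0 j] h(1,3) by blast
    then show False using h by simp
  qed
  have g1: "(y, x) \<in> Grel Y \<pi>" using y h yx ynx unfolding Grel_def by blast
  show ?thesis
  proof (cases "u \<in> set (\<pi> w)")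
    case True
    have wY: "w \<in> Y" using uw unfolding Grel_def by blast
    then have "w = x" using True ux disj h by blast
    then show ?thesis using g1 by simp
  next
    case False
    then obtain c where c: "c \<in> Y" "hd (\<pi> c) \<noteq> c" "u = hd (\<pi> c)" "c \<in> set (\<pi> w)" and wY: "w \<in> Y"
      using uw unfolding Grel_def by blast
    have "u \<in> set (\<pi> c)" using c nonempty by simp
    then have cx: "c = x" using disj c h ux by blast
    have cw: "c \<noteq> w"
    proof
      assume "c = w"
      then show False using selfhd c by blast
    qed
    have g2: "(x, w) \<in> Grel Y \<pi>" using c cx cw wY unfolding Grel_def by blast
    show ?thesis using g1 g2 by auto
  qed
qed

lemma absorb2: "(y, u) \<in> Urel \<Longrightarrow> (u, w) \<in> Urel \<Longrightarrow> (y, w) \<in> Urel"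
  unfolding Urel_def using before_trans by blast

lemma absorb1': "(y, u) \<in> Urel \<Longrightarrow> (u, w) \<in> (Grel Y \<pi>)\<^sup>+ \<Longrightarrow> (y, w) \<in> (Grel Y \<pi>)\<^sup>+"
proof -
  assume yu: "(y, u) \<in> Urel" and uw: "(u, w) \<in> (Grel Y \<pi>)\<^sup>+"
  obtain c where c: "(u, c) \<in> Grel Y \<pi>" "(c, w) \<in> (Grel Y \<pi>)\<^sup>*" using tranclD[OF uw] by blast
  have "(y, c) \<in> (Grel Y \<pi>)\<^sup>+" using absorb1[OF yu c(1)] .
  then show ?thesis using c(2) by (rule trancl_rtrancl_trancl)
qed

lemma norm_form:
  "(a, b) \<in> (Grel Y \<pi> \<union> Urel)\<^sup>+ \<Longrightarrow> (a, b) \<in> (Grel Y \<pi>)\<^sup>+ \<or> (a, b) \<in> Urel \<or> (\<exists>c. (a, c) \<in> (Grel Y \<pi>)\<^sup>+ \<and> (c, b) \<in> Urel)"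
proof (induction rule: trancl_induct)
  case (base y) then show ?case by auto
next
  case (step y z)
  from step.IH show ?case
  proof (elim disjE exE conjE)
    assume ay: "(a, y) \<in> (Grel Y \<pi>)\<^sup>+"
    show ?thesis using step.hyps(2)
    proof
      assume "(y, z) \<in> Grel Y \<pi>"
      then have "(a, z) \<in> (Grel Y \<pi>)\<^sup>+" using ay by (meson trancl.trancl_into_trancl)
      then show ?thesis by blast
    next
      assume "(y, z) \<in> Urel" then show ?thesis using ay by blast
    qed
  next
    assume ay: "(a, y) \<in> Urel"
    show ?thesis using step.hyps(2)
    proof
      assume "(y, z) \<in> Grel Y \<pi>" then show ?thesis using absorb1[OF ay] by blast
    next
      assume "(y, z) \<in> Urel" then show ?thesis using absorb2[OF ay] by blast
    qed
  next
    fix c assume ac: "(a, c) \<in> (Grel Y \<pi>)\<^sup>+" and cy: "(c, y) \<in> Urel"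
    show ?thesis using step.hyps(2)
    proof
      assume "(y, z) \<in> Grel Y \<pi>"
      then have "(c, z) \<in> (Grel Y \<pi>)\<^sup>+" using absorb1[OF cy] by blast
      then show ?thesis using ac by (meson trancl_trans)
    next
      assume "(y, z) \<in> Urel" then show ?thesis using absorb2[OF cy] ac by blast
    qed
  qed
qed

lemma acyc2: "(a, a) \<notin> (Grel Y \<pi> \<union> Urel)\<^sup>+"
proof
  assume "(a, a) \<in> (Grel Y \<pi> \<union> Urel)\<^sup>+"
  then consider "(a, a) \<in> (Grel Y \<pi>)\<^sup>+" | "(a, a) \<in> Urel" | c where "(a, c) \<in> (Grel Y \<pi>)\<^sup>+" "(c, a) \<in> Urel"
    using norm_form by blast
  then show False
  proof cases
    case 1 then show ?thesis using acyclic by blast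
  next
    case 2 then show ?thesis using before_irrefl unfolding Urel_def by blast
  next
    case 3
    then have "(c, c) \<in> (Grel Y \<pi>)\<^sup>+" using absorb1' by blast
    then show ?thesis using acyclic by blast
  qed
qed

lemma Om_nonneg: "a < m \<Longrightarrow> c < m \<Longrightarrow> 0 \<le> Om $$ (a, c)"
  using ee_pos by (simp add: Om_idx)
lemma Nm_nonneg: "a < m \<Longrightarrow> c < m \<Longrightarrow> 0 \<le> Nm $$ (a, c)"
  by (simp add: Nm_idx)

lemma phi_w: "phi m Lam Om = Nm\<^sup>T * Om * Nm"
  unfolding phi_def matinv_Nm ..

lemma htr_w: "(1\<^sub>m m - Lam)\<^sup>T * phi m Lam Om = Om * Nm"
proof -
  have c1: "(1\<^sub>m m - Lam)\<^sup>T \<in> carrier_mat m m" using IL_carrier by simp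
  have c2: "Nm\<^sup>T \<in> carrier_mat m m" using Nm_carrier by simp
  have "(1\<^sub>m m - Lam)\<^sup>T * (Nm\<^sup>T * Om * Nm) = ((1\<^sub>m m - Lam)\<^sup>T * (Nm\<^sup>T * Om)) * Nm"
    using c1 c2 Om_carrier Nm_carrier by (metis assoc_mult_mat mult_carrier_mat)
  also have "(1\<^sub>m m - Lam)\<^sup>T * (Nm\<^sup>T * Om) = ((1\<^sub>m m - Lam)\<^sup>T * Nm\<^sup>T) * Om"
    using c1 c2 Om_carrier by (metis assoc_mult_mat)
  also have "(1\<^sub>m m - Lam)\<^sup>T * Nm\<^sup>T = (Nm * (1\<^sub>m m - Lam))\<^sup>T"
    using transpose_mult[OF Nm_carrier IL_carrier] by simp
  also have "\<dots> = 1\<^sub>m m" using inv_right by simp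
  finally show ?thesis unfolding phi_w using Om_carrier by simp
qed

definition E1 :: "nat \<Rightarrow> nat \<Rightarrow> real" where
  "E1 a b = (\<Sum>c\<in>{0..<m}. Om $$ (a, c) * Nm $$ (c, b))"
definition E2 :: "nat \<Rightarrow> nat \<Rightarrow> real" where
  "E2 a b = (\<Sum>u\<in>{0..<m}. Nm $$ (u, a) * E1 u b)"

lemma E1_eq: "a < m \<Longrightarrow> b < m \<Longrightarrow> ((1\<^sub>m m - Lam)\<^sup>T * phi m Lam Om) $$ (a, b) = E1 a b"
  unfolding htr_w E1_def using mult_entry[OF Om_carrier Nm_carrier] by simp

lemma E2_eq: "a < m \<Longrightarrow> b < m \<Longrightarrow> (phi m Lam Om) $$ (a, b) = E2 a b"
proof -
  assume ab: "a < m" "b < m"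
  have c2: "Nm\<^sup>T \<in> carrier_mat m m" using Nm_carrier by simp
  have "phi m Lam Om = Nm\<^sup>T * (Om * Nm)" unfolding phi_w using c2 Om_carrier Nm_carrier by simp
  then have "(phi m Lam Om) $$ (a, b) = (\<Sum>u\<in>{0..<m}. Nm\<^sup>T $$ (a, u) * (Om * Nm) $$ (u, b))"
    using mult_entry[OF c2 mult_carrier_mat[OF Om_carrier Nm_carrier] ab] by simp
  also have "\<dots> = E2 a b" unfolding E2_def E1_def using ab Nm_carrier
    by (intro sum.cong) (auto simp: mult_entry[OF Om_carrier Nm_carrier])
  finally show ?thesis .
qed

lemma E1_nonneg: "a < m \<Longrightarrow> b < m \<Longrightarrow> 0 \<le> E1 a b"
  unfolding E1_def using Om_nonneg Nm_nonneg by (intro sum_nonneg) auto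

lemma E1_diag: "a \<in> Y \<Longrightarrow> 0 < E1 a (\<sigma> a)"
proof -
  assume a: "a \<in> Y"
  have am: "a < m" using a Ym by auto
  have sm: "\<sigma> a < m" using sig_m[OF a] .
  define c0 where "c0 = hd (\<pi> a)"
  have c0in: "c0 \<in> set (\<pi> a)" unfolding c0_def using nonempty[OF a] by simp
  have c0m: "c0 < m" using nodes_m[OF a c0in] .
  have "Nm $$ (c0, \<sigma> a) = 1" using Nm_last[OF a, of c0] c0in c0m sm by (simp add: Nm_idx)
  moreover have "0 < Om $$ (a, c0)"
  proof (cases "c0 = a")
    case True then show ?thesis using am by (simp add: Om_idx)
  next
    case False
    then have "pair a c0" unfolding pair_def bid_def c0_def using a by auto
    then show ?thesis using False am c0m ee_pos by (simp add: Om_idx)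
  qed
  ultimately have pos: "0 < Om $$ (a, c0) * Nm $$ (c0, \<sigma> a)" by simp
  show ?thesis unfolding E1_def
    using pos c0m am sm Om_nonneg Nm_nonneg by (intro sum_pos2[of _ c0]) auto
qed

lemma E2_diag: "a \<in> Y \<Longrightarrow> 0 < E2 a (\<sigma> a)"
proof -
  assume a: "a \<in> Y"
  have am: "a < m" using a Ym by auto
  have sm: "\<sigma> a < m" using sig_m[OF a] .
  have pos: "0 < Nm $$ (a, a) * E1 a (\<sigma> a)" using E1_diag[OF a] am by (simp add: Nm_idx)
  show ?thesis unfolding E2_def
    using pos am sm E1_nonneg Nm_nonneg by (intro sum_pos2[of _ a]) (auto intro!: mult_nonneg_nonneg)
qed

lemma E1_off: "a \<in> Y \<Longrightarrow> w \<in> Y \<Longrightarrow> a \<noteq> w \<Longrightarrow> E1 a (\<sigma> w) \<noteq> 0 \<Longrightarrow> (a, w) \<in> (Grel Y \<pi> \<union> Urel)\<^sup>+"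
proof -
  assume a: "a \<in> Y" and w: "w \<in> Y" and aw: "a \<noteq> w" and nz: "E1 a (\<sigma> w) \<noteq> 0"
  have am: "a < m" using a Ym by auto
  have sm: "\<sigma> w < m" using sig_m[OF w] .
  obtain c where c: "c \<in> {0..<m}" "Om $$ (a, c) * Nm $$ (c, \<sigma> w) \<noteq> 0"
    using nz unfolding E1_def by (meson sum.not_neutral_contains_not_neutral)
  have cm: "c < m" using c by simp
  have "a = c \<or> pair a c" using c am cm by (auto simp: Om_idx split: if_splits)
  moreover have "c \<in> set (\<pi> w)" using c cm sm Nm_last[OF w, of c] by (auto simp: Nm_idx split: if_splits)
  ultimately show ?thesis using S_edge[OF a w aw, of a c] by blast
qed

lemma E2_off: "a \<in> Y \<Longrightarrow> w \<in> Y \<Longrightarrow> a \<noteq> w \<Longrightarrow> E2 a (\<sigma> w) \<noteq> 0 \<Longrightarrow> (a, w) \<in> (Grel Y \<pi> \<union> Urel)\<^sup>+"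
proof -
  assume a: "a \<in> Y" and w: "w \<in> Y" and aw: "a \<noteq> w" and nz: "E2 a (\<sigma> w) \<noteq> 0"
  have am: "a < m" using a Ym by auto
  have sm: "\<sigma> w < m" using sig_m[OF w] .
  obtain u where u: "u \<in> {0..<m}" "Nm $$ (u, a) * E1 u (\<sigma> w) \<noteq> 0"
    using nz unfolding E2_def by (meson sum.not_neutral_contains_not_neutral)
  have um: "u < m" using u by simp
  have ua: "u = a \<or> before u a" using u am um by (auto simp: Nm_idx split: if_splits)
  have e1: "E1 u (\<sigma> w) \<noteq> 0" using u(2) by auto
  obtain c where c: "c \<in> {0..<m}" "Om $$ (u, c) * Nm $$ (c, \<sigma> w) \<noteq> 0"
    using e1 unfolding E1_def by (meson sum.not_neutral_contains_not_neutral)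
  have cm: "c < m" using c by simp
  have "u = c \<or> pair u c" using c um cm by (auto simp: Om_idx split: if_splits)
  moreover have "c \<in> set (\<pi> w)" using c cm sm Nm_last[OF w, of c] by (auto simp: Nm_idx split: if_splits)
  ultimately show ?thesis using S_edge[OF a w aw ua] by blast
qed

end

lemma perm_acyc:
  assumes r: "r permutes S" and fin: "finite S"
    and step: "\<And>i. i \<in> S \<Longrightarrow> r i = i \<or> (f i, f (r i)) \<in> T\<^sup>+"
    and acyc: "\<And>a. (a, a) \<notin> T\<^sup>+"
    and i: "i \<in> S"
  shows "r i = i"
proof (rule ccontr)
  assume ri: "r i \<noteq> i"
  have injr: "inj r" using r by (rule permutes_inj)
  have orb: "(r ^^ k) i \<in> S" for k
    by (induction k) (auto simp: i permutes_in_image[OF r])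
  have "{y. \<exists>n. y = (r ^^ n) i} \<subseteq> S" using orb by blast
  then have "finite {y. \<exists>n. y = (r ^^ n) i}" using fin finite_subset by blast
  then obtain p where p: "p > 0" "(r ^^ p) i = i" using funpow_inj_finite[OF injr] by blast
  have chain: "k \<ge> 1 \<Longrightarrow> (f i, f ((r ^^ k) i)) \<in> T\<^sup>+" for k
  proof (induction k rule: nat_induct_at_least)
    case base
    then show ?case using step[OF i] ri by simp
  next
    case (Suc k)
    have x: "(r ^^ k) i \<in> S" using orb .
    show ?case
    proof (cases "r ((r ^^ k) i) = (r ^^ k) i")
      case True then show ?thesis using Suc.IH by simp
    next
      case False
      then have "(f ((r ^^ k) i), f (r ((r ^^ k) i))) \<in> T\<^sup>+" using step[OF x] by blast
      then show ?thesis using Suc.IH by (simp add: trancl_trans)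
    qed
  qed
  have "(f i, f i) \<in> T\<^sup>+" using chain[of p] p by simp
  then show False using acyc by blast
qed

lemma det_perm_unique:
  fixes A :: "real mat"
  assumes A: "A \<in> carrier_mat n n" and tau: "\<tau> permutes {0..<n}"
    and diag: "\<And>i. i < n \<Longrightarrow> A $$ (i, \<tau> i) \<noteq> 0"
    and uniq: "\<And>q. q permutes {0..<n} \<Longrightarrow> (\<forall>i<n. A $$ (i, q i) \<noteq> 0) \<Longrightarrow> q = \<tau>"
  shows "det A \<noteq> 0"
proof -
  have "det A = (\<Sum>q\<in>{q. q permutes {0..<n}}. signof q * (\<Prod>i = 0..<n. A $$ (i, q i)))"
    using det_def'[OF A] .
  also have "\<dots> = signof \<tau> * (\<Prod>i = 0..<n. A $$ (i, \<tau> i))"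
  proof (rule sum_single)
    show "finite {q. q permutes {0..<n}}" by (simp add: finite_permutations)
    show "\<tau> \<in> {q. q permutes {0..<n}}" using tau by simp
    fix q assume q: "q \<in> {q. q permutes {0..<n}}" "q \<noteq> \<tau>"
    then obtain i where "i < n" "A $$ (i, q i) = 0" using uniq by blast
    then have "(\<Prod>i = 0..<n. A $$ (i, q i)) = 0" by (intro prod_zero) auto
    then show "signof q * (\<Prod>i = 0..<n. A $$ (i, q i)) = 0" by simp
  qed
  also have "\<dots> \<noteq> 0" using diag by (simp add: prod_zero_iff)
  finally show ?thesis .
qed




context wsys
begin

lemma det_witness:
  assumes ybij: "bij_betw y {0..<n} Y" and pbij: "bij_betw p {0..<n} P"
  shows "det (matA m D B v n y p Lam Om) \<noteq> 0"
proof -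
  define T where "T = Grel Y \<pi> \<union> Urel"
  have sbij: "bij_betw \<sigma> Y P" using S unfolding Sys_def by blast
  define Ent where "Ent a b = (if a \<in> htr m D B v then E1 a b else E2 a b)" for a b
  define M where "M = matA m D B v n y p Lam Om"
  have Mc: "M \<in> carrier_mat n n" unfolding M_def matA_def Let_def by simp
  have yY: "i < n \<Longrightarrow> y i \<in> Y" for i using ybij unfolding bij_betw_def by auto
  have pP: "j < n \<Longrightarrow> p j \<in> P" for j using pbij unfolding bij_betw_def by auto
  have Pm: "b \<in> P \<Longrightarrow> b < m" for b using sbij sig_m unfolding bij_betw_def by auto
  have ym: "i < n \<Longrightarrow> y i < m" for i using yY[of i] Ym by auto
  have Ment: "i < n \<Longrightarrow> j < n \<Longrightarrow> M $$ (i, j) = Ent (y i) (p j)" for i j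
    unfolding M_def matA_def Let_def Ent_def using E1_eq E2_eq ym Pm pP by simp
  define wj where "wj j = inv_into Y \<sigma> (p j)" for j
  have pimg: "j < n \<Longrightarrow> p j \<in> \<sigma> ` Y" for j using pP sbij unfolding bij_betw_def by blast
  have wjY: "j < n \<Longrightarrow> wj j \<in> Y" for j unfolding wj_def using pimg by (rule inv_into_into)
  have wjs: "j < n \<Longrightarrow> \<sigma> (wj j) = p j" for j unfolding wj_def using pimg by (rule f_inv_into_f)
  have Ediag: "a \<in> Y \<Longrightarrow> Ent a (\<sigma> a) \<noteq> 0" for a
  proof -
    assume a: "a \<in> Y"
    show ?thesis unfolding Ent_def using E1_diag[OF a] E2_diag[OF a] by simp
  qed
  have Eoff: "a \<in> Y \<Longrightarrow> w \<in> Y \<Longrightarrow> a \<noteq> w \<Longrightarrow> Ent a (\<sigma> w) \<noteq> 0 \<Longrightarrow> (a, w) \<in> T\<^sup>+" for a w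
  proof -
    assume h: "a \<in> Y" "w \<in> Y" "a \<noteq> w" "Ent a (\<sigma> w) \<noteq> 0"
    show ?thesis
    proof (cases "a \<in> htr m D B v")
      case True
      then have "E1 a (\<sigma> w) \<noteq> 0" using h(4) unfolding Ent_def by simp
      then show ?thesis unfolding T_def using E1_off h by blast
    next
      case False
      then have "E2 a (\<sigma> w) \<noteq> 0" using h(4) unfolding Ent_def by simp
      then show ?thesis unfolding T_def using E2_off h by blast
    qed
  qed
  define \<tau> where "\<tau> i = (if i < n then inv_into {0..<n} p (\<sigma> (y i)) else i)" for i
  have Pimg: "P = p ` {0..<n}" using pbij unfolding bij_betw_def by simp
  have simg: "i < n \<Longrightarrow> \<sigma> (y i) \<in> p ` {0..<n}" for i
  proof -
    assume i: "i < n"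
    have "\<sigma> (y i) \<in> P" using sbij yY[OF i] unfolding bij_betw_def by blast
    then show ?thesis using Pimg by simp
  qed
  have tau_in: "i < n \<Longrightarrow> \<tau> i < n" for i
  proof -
    assume i: "i < n"
    have "inv_into {0..<n} p (\<sigma> (y i)) \<in> {0..<n}" using simg[OF i] by (rule inv_into_into)
    then show ?thesis unfolding \<tau>_def using i by simp
  qed
  have p_tau: "i < n \<Longrightarrow> p (\<tau> i) = \<sigma> (y i)" for i
  proof -
    assume i: "i < n"
    have "p (inv_into {0..<n} p (\<sigma> (y i))) = \<sigma> (y i)" using simg[OF i] by (rule f_inv_into_f)
    then show ?thesis unfolding \<tau>_def using i by simp
  qed
  have pinj: "inj_on p {0..<n}" using pbij unfolding bij_betw_def by blast
  have tau_perm: "\<tau> permutes {0..<n}"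
  proof (rule bij_imp_permutes)
    show "x \<notin> {0..<n} \<Longrightarrow> \<tau> x = x" for x unfolding \<tau>_def by simp
    have "inj_on \<tau> {0..<n}"
    proof (rule inj_onI)
      fix i j assume ij: "i \<in> {0..<n}" "j \<in> {0..<n}" "\<tau> i = \<tau> j"
      then have "\<sigma> (y i) = \<sigma> (y j)" using p_tau by (metis atLeastLessThan_iff)
      then have "y i = y j" using sbij yY ij unfolding bij_betw_def inj_on_def by auto
      then show "i = j" using ybij ij unfolding bij_betw_def inj_on_def by blast
    qed
    moreover have "\<tau> ` {0..<n} \<subseteq> {0..<n}" using tau_in by auto
    ultimately show "bij_betw \<tau> {0..<n} {0..<n}"
      by (simp add: bij_betw_def endo_inj_surj)
  qed
  show ?thesis
    unfolding M_def[symmetric]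
  proof (rule det_perm_unique[OF Mc tau_perm])
    fix i assume i: "i < n"
    show "M $$ (i, \<tau> i) \<noteq> 0" using Ment[OF i tau_in[OF i]] p_tau[OF i] Ediag yY i by simp
  next
    fix q assume q: "q permutes {0..<n}" and nz: "\<forall>i<n. M $$ (i, q i) \<noteq> 0"
    have qin: "i < n \<Longrightarrow> q i < n" for i using q permutes_in_image by fastforce
    define r where "r i = (if i < n then inv_into {0..<n} y (wj (q i)) else i)" for i
    have Yimg: "Y = y ` {0..<n}" using ybij unfolding bij_betw_def by simp
    have yimg: "i < n \<Longrightarrow> wj (q i) \<in> y ` {0..<n}" for i
      using wjY[OF qin] Yimg by simp
    have r_in: "i < n \<Longrightarrow> r i < n" for i
    proof -
      assume i: "i < n"
      have "inv_into {0..<n} y (wj (q i)) \<in> {0..<n}" using yimg[OF i] by (rule inv_into_into)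
      then show ?thesis unfolding r_def using i by simp
    qed
    have y_r: "i < n \<Longrightarrow> y (r i) = wj (q i)" for i
    proof -
      assume i: "i < n"
      have "y (inv_into {0..<n} y (wj (q i))) = wj (q i)" using yimg[OF i] by (rule f_inv_into_f)
      then show ?thesis unfolding r_def using i by simp
    qed
    have yinj: "inj_on y {0..<n}" using ybij unfolding bij_betw_def by blast
    have r_perm: "r permutes {0..<n}"
    proof (rule bij_imp_permutes)
      show "x \<notin> {0..<n} \<Longrightarrow> r x = x" for x unfolding r_def by simp
      have "inj_on r {0..<n}"
      proof (rule inj_onI)
        fix i j assume ij: "i \<in> {0..<n}" "j \<in> {0..<n}" "r i = r j"
        then have "wj (q i) = wj (q j)" using y_r by (metis atLeastLessThan_iff)
        then have "p (q i) = p (q j)" using wjs qin ij by (metis atLeastLessThan_iff)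
        then have "q i = q j" using pinj qin ij unfolding inj_on_def by simp
        moreover have "inj q" using q by (rule permutes_inj)
        ultimately show "i = j" unfolding inj_def by blast
      qed
      moreover have "r ` {0..<n} \<subseteq> {0..<n}" using r_in by auto
      ultimately show "bij_betw r {0..<n} {0..<n}"
        by (simp add: bij_betw_def endo_inj_surj)
    qed
    have step: "r i = i \<or> (y i, y (r i)) \<in> T\<^sup>+" if i: "i \<in> {0..<n}" for i
    proof (cases "y i = wj (q i)")
      case True
      have "inv_into {0..<n} y (y i) = i" using yinj i by (simp add: inv_into_f_f)
      then have "r i = i" unfolding r_def using i True by simp
      then show ?thesis by simp
    next
      case False
      have "Ent (y i) (\<sigma> (wj (q i))) \<noteq> 0" using nz Ment qin wjs i by auto
      then have "(y i, wj (q i)) \<in> T\<^sup>+" using Eoff yY wjY qin i False by simp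
      then show ?thesis using y_r i by simp
    qed
    have acT: "(a, a) \<notin> T\<^sup>+" for a unfolding T_def by (rule acyc2)
    have rid: "i < n \<Longrightarrow> r i = i" for i
      using perm_acyc[OF r_perm _ step acT] by simp
    show "q = \<tau>"
    proof
      fix i
      show "q i = \<tau> i"
      proof (cases "i < n")
        case True
        have "wj (q i) = y i" using rid[OF True] y_r[OF True] by simp
        then have "p (q i) = \<sigma> (y i)" using wjs qin True by metis
        then have "p (q i) = p (\<tau> i)" using p_tau True by simp
        then show ?thesis using pinj qin tau_in True unfolding inj_on_def by simp
      next
        case False
        then show ?thesis using q unfolding \<tau>_def by (simp add: permutes_not_in)
      qed
    qed
  qed
qed

end

lemma poly_fun_sum:
  assumes "finite I" "\<And>i. i \<in> I \<Longrightarrow> poly_fun m (f i)"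
  shows "poly_fun m (\<lambda>x. \<Sum>i\<in>I. f i x)"
  using assms
proof (induction I rule: finite_induct)
  case empty then show ?case using poly_fun.const[of m 0] by simp
next
  case (insert a F)
  have "poly_fun m (\<lambda>x. f a x + (\<Sum>i\<in>F. f i x))"
    using insert by (intro poly_fun.add) auto
  then show ?case using insert by simp
qed

lemma poly_fun_prod:
  assumes "finite I" "\<And>i. i \<in> I \<Longrightarrow> poly_fun m (f i)"
  shows "poly_fun m (\<lambda>x. \<Prod>i\<in>I. f i x)"
  using assms
proof (induction I rule: finite_induct)
  case empty then show ?case using poly_fun.const[of m 1] by simp
next
  case (insert a F)
  have "poly_fun m (\<lambda>x. f a x * (\<Prod>i\<in>F. f i x))"
    using insert by (intro poly_fun.mult) auto
  then show ?case using insert by simp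
qed

lemma poly_fun_det:
  assumes "\<And>i j. i < k \<Longrightarrow> j < k \<Longrightarrow> poly_fun m (\<lambda>x. g x i j)"
  shows "poly_fun m (\<lambda>x. det (mat k k (\<lambda>(i, j). g x i j)))"
proof -
  have eq: "(\<lambda>x. det (mat k k (\<lambda>(i, j). g x i j))) =
      (\<lambda>x. \<Sum>q\<in>{q. q permutes {0..<k}}. signof q * (\<Prod>i\<in>{0..<k}. g x i (q i)))"
  proof
    fix x
    have "det (mat k k (\<lambda>(i, j). g x i j)) = (\<Sum>q\<in>{q. q permutes {0..<k}}. signof q * (\<Prod>i\<in>{0..<k}. mat k k (\<lambda>(i, j). g x i j) $$ (i, q i)))"
      by (rule det_def') simp
    also have "\<dots> = (\<Sum>q\<in>{q. q permutes {0..<k}}. signof q * (\<Prod>i\<in>{0..<k}. g x i (q i)))"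
    proof (intro sum.cong refl arg_cong2[where f = "(*)"] prod.cong)
      fix q i assume q: "q \<in> {q. q permutes {0..<k}}" and i: "i \<in> {0..<k}"
      have "q i < k" using q i permutes_in_image by fastforce
      then show "mat k k (\<lambda>(i, j). g x i j) $$ (i, q i) = g x i (q i)" using i by simp
    qed
    finally show "det (mat k k (\<lambda>(i, j). g x i j)) = (\<Sum>q\<in>{q. q permutes {0..<k}}. signof q * (\<Prod>i\<in>{0..<k}. g x i (q i)))" .
  qed
  show ?thesis unfolding eq
  proof (rule poly_fun_sum)
    show "finite {q. q permutes {0..<k}}" by (simp add: finite_permutations)
    fix q assume q: "q \<in> {q. q permutes {0..<k}}"
    show "poly_fun m (\<lambda>x. signof q * (\<Prod>i\<in>{0..<k}. g x i (q i)))"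
    proof (rule poly_fun.mult)
      show "poly_fun m (\<lambda>x. signof q)" by (rule poly_fun.const)
      show "poly_fun m (\<lambda>x. \<Prod>i\<in>{0..<k}. g x i (q i))"
      proof (rule poly_fun_prod)
        fix i assume i: "i \<in> {0..<k}"
        have "q i < k" using q i permutes_in_image by fastforce
        then show "poly_fun m (\<lambda>x. g x i (q i))" using assms i by simp
      qed simp
    qed
  qed
qed

definition Mth :: "nat \<Rightarrow> real mat \<times> real mat \<Rightarrow> real mat" where
  "Mth m \<theta> = mat m m (\<lambda>(a, b). (if a = b then 1 else 0) - fst \<theta> $$ (a, b))"

lemma poly_Mth: "a < m \<Longrightarrow> b < m \<Longrightarrow> poly_fun m (\<lambda>\<theta>. (if a = b then 1 else 0) - fst \<theta> $$ (a, b))"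
proof -
  assume ab: "a < m" "b < m"
  have l: "poly_fun m (\<lambda>(\<Lambda>, \<Omega>). \<Lambda> $$ (a, b))" using ab by (rule poly_fun.lam)
  have e: "(\<lambda>(\<Lambda>, \<Omega>). \<Lambda> $$ (a, b)) = (\<lambda>\<theta>. fst \<theta> $$ (a, b))" by auto
  have l': "poly_fun m (\<lambda>\<theta>. fst \<theta> $$ (a, b))" using l unfolding e .
  have "poly_fun m (\<lambda>\<theta>. (if a = b then 1 else 0) + (- 1) * fst \<theta> $$ (a, b))"
    by (intro poly_fun.add poly_fun.mult poly_fun.const l')
  then show ?thesis by simp
qed

lemma poly_om: "a < m \<Longrightarrow> b < m \<Longrightarrow> poly_fun m (\<lambda>\<theta>. snd \<theta> $$ (a, b))"
proof -
  assume ab: "a < m" "b < m"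
  have l: "poly_fun m (\<lambda>(\<Lambda>, \<Omega>). \<Omega> $$ (a, b))" using ab by (rule poly_fun.om)
  have e: "(\<lambda>(\<Lambda>, \<Omega>). \<Omega> $$ (a, b)) = (\<lambda>\<theta>. snd \<theta> $$ (a, b))" by auto
  show ?thesis using l unfolding e .
qed

lemma poly_dth: "poly_fun m (\<lambda>\<theta>. det (Mth m \<theta>))"
  unfolding Mth_def by (rule poly_fun_det) (rule poly_Mth)

lemma poly_adj: "a < m \<Longrightarrow> b < m \<Longrightarrow> poly_fun m (\<lambda>\<theta>. adj_mat (Mth m \<theta>) $$ (a, b))"
proof -
  assume ab: "a < m" "b < m"
  have eq: "(\<lambda>\<theta>. adj_mat (Mth m \<theta>) $$ (a, b)) = (\<lambda>\<theta>. (-1) ^ (b + a) *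
     det (mat (m - 1) (m - 1) (\<lambda>(i, j). (if (if i < b then i else Suc i) = (if j < a then j else Suc j) then 1 else 0)
        - fst \<theta> $$ (if i < b then i else Suc i, if j < a then j else Suc j))))"
  proof
    fix \<theta>
    have "mat_delete (Mth m \<theta>) b a = mat (m - 1) (m - 1) (\<lambda>(i, j). (if (if i < b then i else Suc i) = (if j < a then j else Suc j) then 1 else 0)
        - fst \<theta> $$ (if i < b then i else Suc i, if j < a then j else Suc j))"
      unfolding mat_delete_def Mth_def using ab by (intro eq_matI) auto
    then show "adj_mat (Mth m \<theta>) $$ (a, b) = (-1) ^ (b + a) *
     det (mat (m - 1) (m - 1) (\<lambda>(i, j). (if (if i < b then i else Suc i) = (if j < a then j else Suc j) then 1 else 0)
        - fst \<theta> $$ (if i < b then i else Suc i, if j < a then j else Suc j)))"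
      unfolding adj_mat_def cofactor_def using ab by (simp add: Mth_def)
  qed
  show ?thesis unfolding eq
  proof (rule poly_fun.mult)
    show "poly_fun m (\<lambda>\<theta>. (-1) ^ (b + a))" by (rule poly_fun.const)
    show "poly_fun m (\<lambda>\<theta>. det (mat (m - 1) (m - 1) (\<lambda>(i, j). (if (if i < b then i else Suc i) = (if j < a then j else Suc j) then 1 else 0)
        - fst \<theta> $$ (if i < b then i else Suc i, if j < a then j else Suc j))))"
      by (rule poly_fun_det, rule poly_Mth) auto
  qed
qed

definition Qf :: "nat \<Rightarrow> (nat \<times> nat) set \<Rightarrow> (nat \<times> nat) set \<Rightarrow> nat \<Rightarrow> (nat \<Rightarrow> nat) \<Rightarrow> (nat \<Rightarrow> nat) \<Rightarrow> real mat \<times> real mat \<Rightarrow> nat \<Rightarrow> nat \<Rightarrow> real" where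
  "Qf m D B v y p \<theta> i j = (if y i \<in> htr m D B v
     then det (Mth m \<theta>) * (\<Sum>c\<in>{0..<m}. snd \<theta> $$ (y i, c) * adj_mat (Mth m \<theta>) $$ (c, p j))
     else (\<Sum>u\<in>{0..<m}. adj_mat (Mth m \<theta>) $$ (u, y i) * (\<Sum>c\<in>{0..<m}. snd \<theta> $$ (u, c) * adj_mat (Mth m \<theta>) $$ (c, p j))))"

definition fpoly :: "nat \<Rightarrow> (nat \<times> nat) set \<Rightarrow> (nat \<times> nat) set \<Rightarrow> nat \<Rightarrow> nat \<Rightarrow> (nat \<Rightarrow> nat) \<Rightarrow> (nat \<Rightarrow> nat) \<Rightarrow> real mat \<times> real mat \<Rightarrow> real" where
  "fpoly m D B v n y p \<theta> = det (mat n n (\<lambda>(i, j). Qf m D B v y p \<theta> i j))"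

lemma poly_fpoly:
  assumes "\<And>i. i < n \<Longrightarrow> y i < m" "\<And>j. j < n \<Longrightarrow> p j < m"
  shows "poly_fun m (fpoly m D B v n y p)"
proof -
  have "poly_fun m (\<lambda>\<theta>. det (mat n n (\<lambda>(i, j). Qf m D B v y p \<theta> i j)))"
  proof (rule poly_fun_det)
    fix i j assume ij: "i < n" "j < n"
    show "poly_fun m (\<lambda>\<theta>. Qf m D B v y p \<theta> i j)"
    proof (cases "y i \<in> htr m D B v")
      case True
      have "poly_fun m (\<lambda>\<theta>. det (Mth m \<theta>) * (\<Sum>c\<in>{0..<m}. snd \<theta> $$ (y i, c) * adj_mat (Mth m \<theta>) $$ (c, p j)))"
        using assms ij
        by (intro poly_fun.mult poly_dth poly_fun_sum poly_om poly_adj) auto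
      then show ?thesis unfolding Qf_def using True by simp
    next
      case False
      have "poly_fun m (\<lambda>\<theta>. \<Sum>u\<in>{0..<m}. adj_mat (Mth m \<theta>) $$ (u, y i) * (\<Sum>c\<in>{0..<m}. snd \<theta> $$ (u, c) * adj_mat (Mth m \<theta>) $$ (c, p j)))"
        using assms ij
        by (intro poly_fun.mult poly_dth poly_fun_sum poly_om poly_adj) auto
      then show ?thesis unfolding Qf_def using False by simp
    qed
  qed
  then show ?thesis unfolding fpoly_def by simp
qed

lemma htr_gen:
  fixes A C W :: "real mat"
  assumes A: "A \<in> carrier_mat m m" and C: "C \<in> carrier_mat m m" and CA: "C * A = 1\<^sub>m m"
    and Om: "W \<in> carrier_mat m m"
  shows "A\<^sup>T * (C\<^sup>T * W * C) = W * C"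
proof -
  have c1: "A\<^sup>T \<in> carrier_mat m m" using A by simp
  have c2: "C\<^sup>T \<in> carrier_mat m m" using C by simp
  have "A\<^sup>T * (C\<^sup>T * W * C) = (A\<^sup>T * (C\<^sup>T * W)) * C"
    using c1 c2 Om C by (metis assoc_mult_mat mult_carrier_mat)
  also have "A\<^sup>T * (C\<^sup>T * W) = (A\<^sup>T * C\<^sup>T) * W"
    using c1 c2 Om by (metis assoc_mult_mat)
  also have "A\<^sup>T * C\<^sup>T = (C * A)\<^sup>T"
    using transpose_mult[OF C A] by simp
  also have "\<dots> = 1\<^sub>m m" using CA by simp
  finally show ?thesis using Om by simp
qed

lemma fpoly_eq:
  assumes th: "(\<Lambda>, \<Omega>) \<in> Theta m D B"
    and ym: "\<And>i. i < n \<Longrightarrow> y i < m" and pm: "\<And>j. j < n \<Longrightarrow> p j < m"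
  shows "det (Mth m (\<Lambda>, \<Omega>)) \<noteq> 0 \<and>
    fpoly m D B v n y p (\<Lambda>, \<Omega>) = (det (Mth m (\<Lambda>, \<Omega>)) ^ 2) ^ n * det (matA m D B v n y p \<Lambda> \<Omega>)"
proof -
  have L: "\<Lambda> \<in> carrier_mat m m" and O: "\<Omega> \<in> carrier_mat m m" and inv: "invertible_mat (1\<^sub>m m - \<Lambda>)"
    using th unfolding Theta_def by auto
  define A where "A = 1\<^sub>m m - \<Lambda>"
  have Ac: "A \<in> carrier_mat m m" unfolding A_def using L unfolding carrier_mat_def by simp
  have MA: "Mth m (\<Lambda>, \<Omega>) = A" unfolding Mth_def A_def using L by (intro eq_matI) auto
  define d where "d = det A"
  have d0: "d \<noteq> 0"
  proof -
    obtain B' where AB: "A * B' = 1\<^sub>m m" and BA: "B' * A = 1\<^sub>m (dim_row B')"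
      using inv Ac unfolding invertible_mat_def inverts_mat_def A_def by auto
    have B': "B' \<in> carrier_mat m m" using AB BA Ac
      by (metis carrier_matD(1) carrier_matD(2) carrier_mat_triv index_mult_mat(3) index_one_mat(3))
    have "det A * det B' = 1" using det_mult[OF Ac B'] AB by simp
    then show ?thesis unfolding d_def by auto
  qed
  define Ad where "Ad = adj_mat A"
  have Adc: "Ad \<in> carrier_mat m m" and AAd: "A * Ad = d \<cdot>\<^sub>m 1\<^sub>m m" and AdA: "Ad * A = d \<cdot>\<^sub>m 1\<^sub>m m"
    using adj_mat[OF Ac] unfolding Ad_def d_def by auto
  define C where "C = (1 / d) \<cdot>\<^sub>m Ad"
  have Cc: "C \<in> carrier_mat m m" unfolding C_def using Adc by simp
  have AC: "A * C = 1\<^sub>m m"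
  proof -
    have "A * C = (1 / d) \<cdot>\<^sub>m (A * Ad)" unfolding C_def using mult_smult_distrib[OF Ac Adc] .
    also have "\<dots> = 1\<^sub>m m" unfolding AAd using d0 by (intro eq_matI) auto
    finally show ?thesis .
  qed
  have CA: "C * A = 1\<^sub>m m"
  proof -
    have "C * A = (1 / d) \<cdot>\<^sub>m (Ad * A)" unfolding C_def using mult_smult_assoc_mat[OF Adc Ac] .
    also have "\<dots> = 1\<^sub>m m" unfolding AdA using d0 by (intro eq_matI) auto
    finally show ?thesis .
  qed
  have MI: "mat_inv m A = C" using mat_inv_eq[OF Ac Cc AC CA] .
  have PH: "phi m \<Lambda> \<Omega> = C\<^sup>T * \<Omega> * C" unfolding phi_def MI[unfolded A_def] ..
  have H: "(1\<^sub>m m - \<Lambda>)\<^sup>T * phi m \<Lambda> \<Omega> = \<Omega> * C" unfolding PH A_def[symmetric] using htr_gen[OF Ac Cc CA O] .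
  have OC: "a < m \<Longrightarrow> b < m \<Longrightarrow> (\<Omega> * C) $$ (a, b) = (1 / d) * (\<Sum>c\<in>{0..<m}. \<Omega> $$ (a, c) * Ad $$ (c, b))" for a b
  proof -
    assume ab: "a < m" "b < m"
    have "(\<Omega> * C) $$ (a, b) = (\<Sum>c\<in>{0..<m}. \<Omega> $$ (a, c) * C $$ (c, b))" using mult_entry[OF O Cc ab] .
    also have "\<dots> = (\<Sum>c\<in>{0..<m}. (1 / d) * (\<Omega> $$ (a, c) * Ad $$ (c, b)))"
      unfolding C_def using Adc ab by (intro sum.cong) auto
    finally show ?thesis by (simp add: sum_distrib_left)
  qed
  have CT: "C\<^sup>T \<in> carrier_mat m m" using Cc by simp
  have PHe: "a < m \<Longrightarrow> b < m \<Longrightarrow> (phi m \<Lambda> \<Omega>) $$ (a, b) = (1 / d) ^ 2 * (\<Sum>u\<in>{0..<m}. Ad $$ (u, a) * (\<Sum>c\<in>{0..<m}. \<Omega> $$ (u, c) * Ad $$ (c, b)))" for a b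
  proof -
    assume ab: "a < m" "b < m"
    have "phi m \<Lambda> \<Omega> = C\<^sup>T * (\<Omega> * C)" unfolding PH using CT O Cc by simp
    then have "(phi m \<Lambda> \<Omega>) $$ (a, b) = (\<Sum>u\<in>{0..<m}. C\<^sup>T $$ (a, u) * (\<Omega> * C) $$ (u, b))"
      using mult_entry[OF CT mult_carrier_mat[OF O Cc] ab] by simp
    also have "\<dots> = (\<Sum>u\<in>{0..<m}. (1 / d) ^ 2 * (Ad $$ (u, a) * (\<Sum>c\<in>{0..<m}. \<Omega> $$ (u, c) * Ad $$ (c, b))))"
      using OC ab Cc Adc unfolding C_def by (intro sum.cong) (auto simp: power2_eq_square)
    finally show ?thesis by (simp add: sum_distrib_left)
  qed
  have QM: "mat n n (\<lambda>(i, j). Qf m D B v y p (\<Lambda>, \<Omega>) i j) = (d ^ 2) \<cdot>\<^sub>m matA m D B v n y p \<Lambda> \<Omega>"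
  proof (rule eq_matI)
    fix i j assume "i < dim_row ((d ^ 2) \<cdot>\<^sub>m matA m D B v n y p \<Lambda> \<Omega>)" "j < dim_col ((d ^ 2) \<cdot>\<^sub>m matA m D B v n y p \<Lambda> \<Omega>)"
    then have ij: "i < n" "j < n" unfolding matA_def Let_def by auto
    show "mat n n (\<lambda>(i, j). Qf m D B v y p (\<Lambda>, \<Omega>) i j) $$ (i, j) = ((d ^ 2) \<cdot>\<^sub>m matA m D B v n y p \<Lambda> \<Omega>) $$ (i, j)"
      using ij ym[OF ij(1)] pm[OF ij(2)] d0
      unfolding matA_def Let_def Qf_def MA Ad_def[symmetric] d_def[symmetric]
      by (simp add: H OC PHe power2_eq_square)
  qed (auto simp: matA_def Let_def)
  have "fpoly m D B v n y p (\<Lambda>, \<Omega>) = (d ^ 2) ^ n * det (matA m D B v n y p \<Lambda> \<Omega>)"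
    unfolding fpoly_def QM by (simp add: matA_def Let_def)
  then show ?thesis using d0 MA unfolding d_def by simp
qed

theorem mainTheorem13:
  fixes m n v :: nat and D B :: "(nat \<times> nat) set" and Y :: "nat set"
    and y p :: "nat \<Rightarrow> nat"
  assumes "mixed_graph m D B"
    and "v < m"
    and "Y \<subseteq> {0..<m} - ({v} \<union> sib B v)"
    and "card Y = n" and "card (pa D v) = n"
    and "bij_betw y {0..<n} Y" and "bij_betw p {0..<n} (pa D v)"
    and "HTC D B v Y"
  shows "\<exists>S. proper_algebraic_subset m D B S \<and>
           (\<forall>\<theta> \<in> Theta m D B - S. det (matA m D B v n y p (fst \<theta>) (snd \<theta>)) \<noteq> 0)"
proof -
  note mg = assms(1) and vm = assms(2) and YV = assms(3) and ybij = assms(6) and pbij = assms(7) and htc = assms(8)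
  have Dm: "D \<subseteq> {0..<m} \<times> {0..<m}" and Bm: "B \<subseteq> {0..<m} \<times> {0..<m}"
    and symB: "\<And>a b. (a, b) \<in> B \<Longrightarrow> (b, a) \<in> B"
    using mg unfolding mixed_graph_def by auto
  have Ym: "Y \<subseteq> {0..<m}" using YV by blast
  have finY: "finite Y" using Ym finite_subset by blast
  have sys: "system_no_sided_intersection D B Y (pa D v)" using htc unfolding HTC_def by blast
  obtain \<sigma> \<pi> where S: "Sys D B Y (pa D v) \<sigma> \<pi>"
    and mini: "\<And>\<sigma>' \<pi>'. Sys D B Y (pa D v) \<sigma>' \<pi>' \<Longrightarrow> mu Y \<pi> \<le> mu Y \<pi>'"
    using minimal_Sys[OF system_Sys[OF sys]] by blast
  have W: "wsys D B Y (pa D v) \<sigma> \<pi> m"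
    unfolding wsys_def wsys_axioms_def minsys_def
    using finY S mini symB Ym Dm Bm vm by auto
  interpret W: wsys D B Y "pa D v" \<sigma> \<pi> m by (rule W)
  have ym: "\<And>i. i < n \<Longrightarrow> y i < m"
  proof -
    fix i assume "i < n"
    then have "y i \<in> Y" using ybij unfolding bij_betw_def by auto
    then show "y i < m" using Ym by auto
  qed
  have pm: "\<And>j. j < n \<Longrightarrow> p j < m"
  proof -
    fix j assume "j < n"
    then have "p j \<in> pa D v" using pbij unfolding bij_betw_def by auto
    then show "p j < m" using Dm unfolding pa_def by auto
  qed
  define F where "F = fpoly m D B v n y p"
  define S0 where "S0 = {\<theta> \<in> Theta m D B. F \<theta> = 0}"
  have wit: "(W.Lam, W.Om) \<in> Theta m D B" by (rule W.in_Theta)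
  have wdet: "det (matA m D B v n y p W.Lam W.Om) \<noteq> 0" using W.det_witness[OF ybij pbij] .
  have Fw: "F (W.Lam, W.Om) \<noteq> 0"
    using fpoly_eq[OF wit ym pm] wdet unfolding F_def by simp
  have propS: "proper_algebraic_subset m D B S0"
    unfolding proper_algebraic_subset_def
  proof (intro exI[of _ "{F}"] conjI)
    show "\<forall>f\<in>{F}. poly_fun m f" unfolding F_def using poly_fpoly[OF ym pm] by simp
    show "S0 = {\<theta> \<in> Theta m D B. \<forall>f\<in>{F}. f \<theta> = 0}" unfolding S0_def by simp
    show "S0 \<noteq> Theta m D B" using wit Fw unfolding S0_def by blast
  qed
  have "\<forall>\<theta> \<in> Theta m D B - S0. det (matA m D B v n y p (fst \<theta>) (snd \<theta>)) \<noteq> 0"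
  proof
    fix \<theta> assume th: "\<theta> \<in> Theta m D B - S0"
    obtain \<Lambda> \<Omega> where tt: "\<theta> = (\<Lambda>, \<Omega>)" by (cases \<theta>)
    have thT: "(\<Lambda>, \<Omega>) \<in> Theta m D B" and F0: "F (\<Lambda>, \<Omega>) \<noteq> 0" using th tt unfolding S0_def by auto
    then show "det (matA m D B v n y p (fst \<theta>) (snd \<theta>)) \<noteq> 0"
      using fpoly_eq[OF thT ym pm] tt unfolding F_def by auto
  qed
  then show ?thesis using propS by blast
qed


end
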